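(* Let $\Phi$ be of type $A_n$. Then (1) the face polynomial of $\mathcal P$ is $f_{\mathcal P}(x)=\sum_{i=0}^{n-1}\binom{n+1}{i+2}(2^{i+2}-2)x^i$; (2) the face polynomial of $\mathcal H$ is $f_{\mathcal H}(x)=1+\sum_{i=1}^{n}\binom{n+1}{i+1}(2^{i+1}-2)x^i$; (3) the characteristic polynomial of $\mathcal H$ is $\chi_{\mathcal H}(t)=(-1)^n n+\sum_{k=1}^n\binom{n+1}{k+1}(-1)^{n-k}t^k=(-1)^n\sum_{i=1}^n(1-t)^i$.
   Context: $\Phi$ is the root system of type $A_n$ in $E=\operatorname{span}_{\mathbb R}\Phi$ ($\dim E=n$), $\mathcal P=\operatorname{conv}(\Phi)$, and $\mathcal H$ is the central arrangement of the linear hyperplanes $\operatorname{span}_{\mathbb R}F$, $F$ a face of $\mathcal P$ of dimension $n-2$. The face polynomial of $\mathcal P$ is $\sum_F x^{\dim F}$ over the nonempty proper faces $F$ of $\mathcal P$. Regions of $\mathcal H$ are connected components of the complement of its hyperplanes; $\mathcal L(\mathcal H)$ is the set of nonempty intersections of hyperplanes of $\mathcal H$ (including $E$, the empty intersection), ordered by reverse inclusion; a face of $\mathcal H$ is a nonempty $\overline R\cap x$ with $R$ a region and $x\in\mathcal L(\mathcal H)$; $f_{\mathcal H}(x)=\sum_F x^{\dim F}$ over all faces of $\mathcal H$; $\chi_{\mathcal H}(t)=\sum_{x\in\mathcal L(\mathcal H)}\mu(x)t^{\dim x}$, where $\mu(x)$ is the Möbius function of $\mathcal L(\mathcal H)$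 from the bottom element $E$ to $x$. *)

theory Defs
  imports "HOL-Analysis.Analysis" "HOL-Computational_Algebra.Polynomial"
begin

text \<open>The root system of type A_n, realised in real^'n with CARD('n) = n+1:
  the vectors e_i - e_j with i distinct from j.\<close>
definition rootsA :: "(real^'n) set" where
  "rootsA = {axis i 1 - axis j 1 | i j. i \<noteq> j}"

definition EA :: "(real^'n) set" where
  "EA = span rootsA"

definition polytopeA :: "(real^'n) set" where
  "polytopeA = convex hull rootsA"

text \<open>The arrangement H: linear spans of the faces of P of dimension n - 2,
  where n = CARD('n) - 1, i.e. n - 2 = CARD('n) - 3.\<close>
definition arrA :: "(real^'n) set set" where
  "arrA = {span F | F. F face_of polytopeA \<and> aff_dim F = int CARD('n) - 3}"

definition face_poly_polytope :: "'a::euclidean_space set \<Rightarrow> int poly" where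
  "face_poly_polytope P =
     (\<Sum>F\<in>{F. F face_of P \<and> F \<noteq> {} \<and> F \<noteq> P}. monom 1 (nat (aff_dim F)))"

definition arr_regions :: "'a::euclidean_space set \<Rightarrow> 'a set set \<Rightarrow> 'a set set" where
  "arr_regions E H = components (E - \<Union>H)"

text \<open>Intersection poset: nonempty intersections of hyperplanes of H
  (E itself is the empty intersection); ordered by reverse inclusion.\<close>
definition arr_lattice :: "'a::euclidean_space set \<Rightarrow> 'a set set \<Rightarrow> 'a set set" where
  "arr_lattice E H = {E \<inter> \<Inter>A | A. A \<subseteq> H \<and> E \<inter> \<Inter>A \<noteq> {}}"

definition arr_faces :: "'a::euclidean_space set \<Rightarrow> 'a set set \<Rightarrow> 'a set set" where
  "arr_faces E H = {closure R \<inter> X | R X. R \<in> arr_regions E H \<and> X \<in> arr_lattice E H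
                       \<and> closure R \<inter> X \<noteq> {}}"

definition arr_face_poly :: "'a::euclidean_space set \<Rightarrow> 'a set set \<Rightarrow> int poly" where
  "arr_face_poly E H = (\<Sum>F\<in>arr_faces E H. monom 1 (nat (aff_dim F)))"

definition mobius_from :: "'a set \<Rightarrow> ('a \<Rightarrow> 'a \<Rightarrow> bool) \<Rightarrow> 'a \<Rightarrow> 'a \<Rightarrow> int" where
  "mobius_from L le b = (THE mu.
      (\<forall>y\<in>L. le b y \<longrightarrow> (\<Sum>z\<in>{z\<in>L. le b z \<and> le z y}. mu z) = (if y = b then 1 else 0))
    \<and> (\<forall>y. (y \<notin> L \<or> \<not> le b y) \<longrightarrow> mu y = 0))"

definition arr_char_poly :: "'a::euclidean_space set \<Rightarrow> 'a set set \<Rightarrow> int poly" where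
  "arr_char_poly E H =
     (\<Sum>X\<in>arr_lattice E H. monom (mobius_from (arr_lattice E H) (\<lambda>x y. y \<subseteq> x) E X) (dim X))"

end

theory Submission
  imports Defs
begin
definition Zs :: "'n set \<Rightarrow> (real^'n::finite) set" where
  "Zs K = {x. (\<forall>k. k \<notin> K \<longrightarrow> x$k = 0) \<and> sum (\<lambda>k. x$k) UNIV = 0}"
definition rt :: "'n::finite \<Rightarrow> 'n \<Rightarrow> real^'n" where "rt i j = axis i 1 - axis j 1"
definition roots :: "'n::finite set \<Rightarrow> 'n set \<Rightarrow> (real^'n) set" where
  "roots I J = {rt i j | i j. i \<in> I \<and> j \<in> J}"

lemma rt_nth: "rt i j $ k = (if k = i then 1 else 0) - (if k = j then 1 else 0)"
  by (simp add: rt_def axis_def)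

lemma rt_sum: "sum (\<lambda>k. rt i j $ k) UNIV = 0"
  by (simp add: rt_nth sum.distrib sum_subtractf)

lemma rt_Zs: "i \<in> K \<Longrightarrow> j \<in> K \<Longrightarrow> rt i j \<in> Zs K"
  by (auto simp: Zs_def rt_sum) (auto simp: rt_nth)

lemma subspace_Zs: "subspace (Zs K)"
  unfolding subspace_def Zs_def by (auto simp: sum.distrib sum_distrib_left[symmetric])

lemma roots_sub_Zs: "roots I J \<subseteq> Zs (I \<union> J)"
  by (auto simp: roots_def intro: rt_Zs)

lemma span_roots:
  assumes "I \<inter> J = {}" "I \<noteq> {}" "J \<noteq> {}"
  shows "span (roots I J) = Zs (I \<union> J)"
proof
  show "span (roots I J) \<subseteq> Zs (I \<union> J)"
    by (rule span_minimal[OF roots_sub_Zs subspace_Zs])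
  show "Zs (I \<union> J) \<subseteq> span (roots I J)"
  proof
    fix x :: "real^'a" assume x: "x \<in> Zs (I \<union> J)"
    obtain i0 where i0: "i0 \<in> I" using assms by auto
    obtain j0 where j0: "j0 \<in> J" using assms by auto
    have mem: "rt k j0 \<in> span (roots I J)" if "k \<in> I \<union> J" for k
    proof (cases "k \<in> I")
      case True then show ?thesis using j0 by (auto simp: roots_def intro!: span_base)
    next
      case False
      then have "k \<in> J" using that by auto
      have "rt k j0 = rt i0 j0 - rt i0 k" by (simp add: rt_def)
      moreover have "rt i0 j0 \<in> span (roots I J)" "rt i0 k \<in> span (roots I J)"
        using i0 j0 \<open>k \<in> J\<close> by (auto simp: roots_def intro!: span_base)
      ultimately show ?thesis by (simp add: span_diff)
    qed
    have s0: "sum (\<lambda>k. x$k) (I \<union> J) = 0"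
    proof -
      have "sum (\<lambda>k. x$k) UNIV = 0" using x by (simp add: Zs_def)
      moreover have "sum (\<lambda>k. x$k) UNIV = sum (\<lambda>k. x$k) (I \<union> J)"
        by (rule sum.mono_neutral_right) (use x in \<open>auto simp: Zs_def\<close>)
      ultimately show ?thesis by simp
    qed
    have eq: "x = (\<Sum>k\<in>I \<union> J. x$k *\<^sub>R rt k j0)"
    proof (subst vec_eq_iff, intro allI)
      fix m
      have "(\<Sum>k\<in>I \<union> J. x$k *\<^sub>R rt k j0) $ m
           = (\<Sum>k\<in>I \<union> J. (if k = m then x$k else 0)) - (if m = j0 then 1 else 0) * (\<Sum>k\<in>I \<union> J. x$k)"
        by (simp add: rt_nth sum_subtractf right_diff_distrib sum_distrib_left sum_distrib_right mult.commute if_distrib[of "(*) _"] cong: if_cong)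
      also have "\<dots> = (if m \<in> I \<union> J then x$m else 0)"
        using s0 by (simp add: sum.delta)
      also have "\<dots> = x$m" using x by (auto simp: Zs_def)
      finally show "x $ m = (\<Sum>k\<in>I \<union> J. x$k *\<^sub>R rt k j0) $ m" by simp
    qed
    show "x \<in> span (roots I J)"
      by (subst eq) (intro span_sum span_mul mem)
  qed
qed

lemma Zs_small: "card K \<le> 1 \<Longrightarrow> Zs K = {0}"
proof -
  assume c: "card K \<le> 1"
  show ?thesis
  proof (cases "K = {}")
    case True then show ?thesis by (auto simp: Zs_def vec_eq_iff intro: subspace_0[OF subspace_Zs])
  next
    case False
    then have "card K = 1" using c by (simp add: le_Suc_eq card_eq_0_iff)
    then obtain k where K: "K = {k}" by (metis card_1_singletonE)
    have "x = 0" if "x \<in> Zs K" for x :: "real^'a"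
    proof -
      have z: "\<And>m. m \<noteq> k \<Longrightarrow> x$m = 0" using that K by (auto simp: Zs_def)
      have "sum (\<lambda>m. x$m) UNIV = sum (\<lambda>m. x$m) {k}"
        by (rule sum.mono_neutral_right) (use z in auto)
      then have "x$k = 0" using that by (simp add: Zs_def)
      then show ?thesis using z by (metis vec_eq_iff zero_index)
    qed
    then show ?thesis using subspace_0[OF subspace_Zs] by auto
  qed
qed

lemma inj_rt: "k0 \<notin> I \<Longrightarrow> inj_on (\<lambda>i. rt i k0) I"
proof (rule inj_onI)
  fix i i' assume "k0 \<notin> I" "i \<in> I" "i' \<in> I" "rt i k0 = rt i' k0"
  then have "rt i k0 $ i = rt i' k0 $ i" by simp
  then show "i = i'" using \<open>k0 \<notin> I\<close> \<open>i \<in> I\<close> by (auto simp: rt_nth split: if_splits)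
qed

lemma indep_rt:
  assumes "k0 \<notin> I"
  shows "independent ((\<lambda>i. rt i k0) ` I)"
proof
  assume "dependent ((\<lambda>i. rt i k0) ` I)"
  then obtain u v where v: "v \<in> (\<lambda>i. rt i k0) ` I" "u v \<noteq> 0"
    and s: "(\<Sum>v\<in>(\<lambda>i. rt i k0) ` I. u v *\<^sub>R v) = 0"
    by (auto simp: dependent_finite)
  then obtain i where i: "i \<in> I" "v = rt i k0" by auto
  have "(\<Sum>i'\<in>I. u (rt i' k0) *\<^sub>R rt i' k0) = 0"
    using s by (simp add: sum.reindex[OF inj_rt[OF assms]])
  then have "(\<Sum>i'\<in>I. u (rt i' k0) *\<^sub>R rt i' k0) $ i = 0" by simp
  moreover have "(\<Sum>i'\<in>I. u (rt i' k0) *\<^sub>R rt i' k0) $ i = (\<Sum>i'\<in>I. if i' = i then u (rt i' k0) else 0)"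
    using assms i by (intro trans[OF sum_component] sum.cong) (auto simp: rt_nth)
  ultimately show False using i v by simp
qed

lemma dim_Zs:
  assumes "K \<noteq> {}"
  shows "dim (Zs K) = card K - 1"
proof (cases "card K \<le> 1")
  case True
  then show ?thesis using assms Zs_small[OF True] by (simp add: le_Suc_eq card_eq_0_iff)
next
  case False
  obtain k0 where k0: "k0 \<in> K" using assms by auto
  let ?I = "K - {k0}"
  have "?I \<noteq> {}" using False k0 by (metis One_nat_def card.empty card_Diff_singleton_if finite_class.finite_UNIV finite_subset subset_UNIV diff_is_0_eq zero_le)
  have rr: "roots ?I {k0} = (\<lambda>i. rt i k0) ` ?I" by (auto simp: roots_def)
  have "Zs K = span (roots ?I {k0})"
    using span_roots[of ?I "{k0}"] \<open>?I \<noteq> {}\<close> k0 by (simp add: insert_absorb)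
  then have "dim (Zs K) = card ((\<lambda>i. rt i k0) ` ?I)"
    using rr indep_rt[of k0 ?I] by (simp add: dim_eq_card_independent)
  also have "\<dots> = card ?I" by (rule card_image) (rule inj_rt, simp)
  also have "\<dots> = card K - 1" using k0 by simp
  finally show ?thesis .
qed


lemma exposed_hull:
  fixes S :: "'a::euclidean_space set"
  assumes fin: "finite S" and le: "\<And>s. s \<in> S \<Longrightarrow> a \<bullet> s \<le> b"
  shows "convex hull S \<inter> {x. a \<bullet> x = b} = convex hull (S \<inter> {x. a \<bullet> x = b})"
proof
  have "convex hull (S \<inter> {x. a \<bullet> x = b}) \<subseteq> convex hull S" by (simp add: hull_mono)
  moreover have "convex hull (S \<inter> {x. a \<bullet> x = b}) \<subseteq> {x. a \<bullet> x = b}"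
    by (rule hull_minimal) (auto simp: convex_hyperplane)
  ultimately show "convex hull (S \<inter> {x. a \<bullet> x = b}) \<subseteq> convex hull S \<inter> {x. a \<bullet> x = b}"
    by blast
  show "convex hull S \<inter> {x. a \<bullet> x = b} \<subseteq> convex hull (S \<inter> {x. a \<bullet> x = b})"
  proof
    fix x assume "x \<in> convex hull S \<inter> {x. a \<bullet> x = b}"
    then obtain u where u0: "\<forall>s\<in>S. 0 \<le> u s" and u1: "sum u S = 1"
      and ux: "(\<Sum>s\<in>S. u s *\<^sub>R s) = x" and ax: "a \<bullet> x = b"
      unfolding convex_hull_finite[OF fin] by blast
    have "a \<bullet> x = (\<Sum>s\<in>S. u s * (a \<bullet> s))" unfolding ux[symmetric] by (simp add: inner_sum_right)
    moreover have "b = (\<Sum>s\<in>S. u s * b)" using u1 by (simp add: sum_distrib_right[symmetric])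
    ultimately have "(\<Sum>s\<in>S. u s * (b - a \<bullet> s)) = 0" using ax
      by (simp add: right_diff_distrib sum_subtractf)
    moreover have nn: "\<And>s. s\<in>S \<Longrightarrow> 0 \<le> u s * (b - a \<bullet> s)" using u0 le by (auto intro!: mult_nonneg_nonneg)
    ultimately have z: "\<forall>s\<in>S. u s * (b - a \<bullet> s) = 0" using sum_nonneg_eq_0_iff[OF fin nn] by simp
    have zz: "\<forall>s\<in>S - (S \<inter> {x. a \<bullet> x = b}). u s = 0" using z by auto
    have "sum u (S \<inter> {x. a \<bullet> x = b}) = sum u S"
      by (rule sum.mono_neutral_left[OF fin]) (use zz in auto)
    then have s1: "sum u (S \<inter> {x. a \<bullet> x = b}) = 1" using u1 by simp
    have "(\<Sum>s\<in>S \<inter> {x. a \<bullet> x = b}. u s *\<^sub>R s) = (\<Sum>s\<in>S. u s *\<^sub>R s)"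
      by (rule sum.mono_neutral_left[OF fin]) (use zz in auto)
    then have s2: "(\<Sum>s\<in>S \<inter> {x. a \<bullet> x = b}. u s *\<^sub>R s) = x" using ux by simp
    have fin2: "finite (S \<inter> {x. a \<bullet> x = b})" using fin by simp
    show "x \<in> convex hull (S \<inter> {x. a \<bullet> x = b})"
      unfolding convex_hull_finite[OF fin2] using u0 s1 s2 by auto
  qed
qed

lemma inner_rt: "a \<bullet> rt i j = a$i - a$j"
  by (simp add: rt_def inner_diff_right inner_axis)

lemma rootsA_eq: "(rootsA :: (real^'n::finite) set) = {rt i j | i j. i \<noteq> j}"
  by (simp add: rootsA_def rt_def)

lemma finite_rootsA: "finite (rootsA :: (real^'n::finite) set)"
proof -
  have "(rootsA :: (real^'n) set) \<subseteq> (\<lambda>(i,j). rt i j) ` UNIV" by (auto simp: rootsA_eq)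
  then show ?thesis by (rule finite_subset) simp
qed

definition PP :: "('n::finite set \<times> 'n set) set" where
  "PP = {(I,J). I \<inter> J = {} \<and> I \<noteq> {} \<and> J \<noteq> {}}"

definition avec :: "'n::finite set \<Rightarrow> 'n set \<Rightarrow> real^'n" where
  "avec I J = (\<chi> k. if k \<in> I then 1 else if k \<in> J then -1 else 0)"

lemma avec_le: "I \<inter> J = {} \<Longrightarrow> s \<in> rootsA \<Longrightarrow> avec I J \<bullet> s \<le> 2"
  by (auto simp: rootsA_eq inner_rt avec_def)

lemma avec_eq: "I \<inter> J = {} \<Longrightarrow> rootsA \<inter> {x. avec I J \<bullet> x = 2} = roots I J"
  by (auto simp: rootsA_eq inner_rt avec_def roots_def split: if_splits) (metis disjoint_iff)

lemma hull_roots_face: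
  assumes "(I,J) \<in> PP"
  shows "convex hull (roots I J) = polytopeA \<inter> {x. avec I J \<bullet> x = 2}"
        "convex hull (roots I J) face_of polytopeA"
        "convex hull (roots I J) \<noteq> {}" "convex hull (roots I J) \<noteq> polytopeA"
proof -
  have d: "I \<inter> J = {}" using assms by (simp add: PP_def)
  show 1: "convex hull (roots I J) = polytopeA \<inter> {x. avec I J \<bullet> x = 2}"
    unfolding polytopeA_def
    using exposed_hull[OF finite_rootsA avec_le[OF d]] avec_eq[OF d] by simp
  have le: "\<And>x. x \<in> polytopeA \<Longrightarrow> avec I J \<bullet> x \<le> 2"
  proof -
    have "rootsA \<subseteq> {x. avec I J \<bullet> x \<le> 2}" using avec_le[OF d] by auto
    then have "polytopeA \<subseteq> {x. avec I J \<bullet> x \<le> 2}"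
      unfolding polytopeA_def by (rule hull_minimal) (simp add: convex_halfspace_le)
    then show "\<And>x. x \<in> polytopeA \<Longrightarrow> avec I J \<bullet> x \<le> 2" by auto
  qed
  show "convex hull (roots I J) face_of polytopeA"
    unfolding 1 by (rule face_of_Int_supporting_hyperplane_le) (auto simp: polytopeA_def le)
  obtain i j where ij: "i \<in> I" "j \<in> J" using assms by (auto simp: PP_def)
  then show "convex hull (roots I J) \<noteq> {}" by (auto simp: roots_def)
  have "rt j i \<in> polytopeA" using ij d by (auto simp: polytopeA_def rootsA_eq intro!: hull_inc) (metis disjoint_iff)
  moreover have "avec I J \<bullet> rt j i \<noteq> 2" using ij d by (auto simp: inner_rt avec_def)
  ultimately show "convex hull (roots I J) \<noteq> polytopeA" unfolding 1 by auto
qed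


lemma rt_inj: "i \<noteq> j \<Longrightarrow> i' \<noteq> j' \<Longrightarrow> rt i j = rt i' j' \<Longrightarrow> i = i' \<and> j = j'"
proof -
  assume a: "i \<noteq> j" "i' \<noteq> j'" "rt i j = rt i' j'"
  then have "rt i j $ i = rt i' j' $ i" "rt i j $ j = rt i' j' $ j" by simp_all
  then show ?thesis using a(1,2) by (auto simp: rt_nth split: if_splits)
qed

lemma roots_inj:
  assumes "(I,J) \<in> PP" "(I',J') \<in> PP" "roots I J = roots I' J'"
  shows "I = I' \<and> J = J'"
proof -
  have d: "I \<inter> J = {}" "I' \<inter> J' = {}" "I \<noteq> {}" "J \<noteq> {}" "I' \<noteq> {}" "J' \<noteq> {}"
    using assms by (auto simp: PP_def)
  have sub: "A \<subseteq> A' \<and> B \<subseteq> B'" if "A \<inter> B = {}" "A' \<inter> B' = {}" "A \<noteq> {}" "B \<noteq> {}"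
    "roots A B = roots A' B'" for A B A' B' :: "'a set"
  proof -
    have "i \<in> A' \<and> j \<in> B'" if "i \<in> A" "j \<in> B" for i j
    proof -
      have "rt i j \<in> roots A B" using that by (auto simp: roots_def)
      then have "rt i j \<in> roots A' B'" using \<open>roots A B = roots A' B'\<close> by simp
      then obtain i' j' where ij': "i' \<in> A'" "j' \<in> B'" "rt i j = rt i' j'" by (auto simp: roots_def)
      have ne: "i \<noteq> j" "i' \<noteq> j'" using that \<open>A \<inter> B = {}\<close> \<open>A' \<inter> B' = {}\<close> ij' by auto
      show ?thesis using rt_inj[OF ne ij'(3)] ij'(1,2) by simp
    qed
    then show ?thesis using \<open>A \<noteq> {}\<close> \<open>B \<noteq> {}\<close> by blast
  qed
  have "I \<subseteq> I' \<and> J \<subseteq> J'" by (rule sub) (use d assms(3) in auto)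
  moreover have "I' \<subseteq> I \<and> J' \<subseteq> J" by (rule sub) (use d assms(3) in auto)
  ultimately show ?thesis by auto
qed

lemma rootsA_hull_roots: "(I,J) \<in> PP \<Longrightarrow> rootsA \<inter> convex hull (roots I J) = roots I J"
proof -
  assume a: "(I,J) \<in> PP"
  then have d: "I \<inter> J = {}" by (simp add: PP_def)
  have "rootsA \<subseteq> polytopeA" by (simp add: polytopeA_def hull_subset)
  have "rootsA \<inter> convex hull (roots I J) = rootsA \<inter> (polytopeA \<inter> {x. avec I J \<bullet> x = 2})"
    by (simp add: hull_roots_face(1)[OF a])
  also have "\<dots> = rootsA \<inter> {x. avec I J \<bullet> x = 2}" using \<open>rootsA \<subseteq> polytopeA\<close> by auto
  finally show ?thesis using avec_eq[OF d] by simp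
qed

lemma hull_roots_inj: "inj_on (\<lambda>(I,J). convex hull (roots I J)) PP"
proof (rule inj_onI, clarify)
  fix I J I' J' assume a: "(I,J) \<in> PP" "(I',J') \<in> PP"
    "convex hull (roots I J) = convex hull (roots I' J')"
  have "roots I J = rootsA \<inter> convex hull (roots I J)" using rootsA_hull_roots[OF a(1)] by simp
  also have "\<dots> = rootsA \<inter> convex hull (roots I' J')" using a(3) by simp
  also have "\<dots> = roots I' J'" using rootsA_hull_roots[OF a(2)] by simp
  finally show "I = I' \<and> J = J'" using roots_inj[OF a(1) a(2)] by simp
qed

lemma face_char:
  assumes F: "F face_of polytopeA" "F \<noteq> {}" "F \<noteq> polytopeA"
  shows "\<exists>(I,J)\<in>PP. F = convex hull (roots I J)"
proof -
  have "polyhedron polytopeA" by (simp add: polytopeA_def polyhedron_convex_hull finite_rootsA)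
  then have "F exposed_face_of polytopeA"
    using exposed_face_of_polyhedron F(1) by blast
  then obtain a b where ab: "polytopeA \<subseteq> {x. a \<bullet> x \<le> b}" "F = polytopeA \<inter> {x. a \<bullet> x = b}"
    by (auto simp: exposed_face_of_def)
  have le: "\<And>s. s \<in> rootsA \<Longrightarrow> a \<bullet> s \<le> b"
    using ab(1) hull_subset[of rootsA convex] by (auto simp: polytopeA_def)
  have Feq: "F = convex hull (rootsA \<inter> {x. a \<bullet> x = b})"
    using ab(2) exposed_hull[OF finite_rootsA le] by (simp add: polytopeA_def)
  define Mx where "Mx = Max (range (\<lambda>k. a$k))"
  define mn where "mn = Min (range (\<lambda>k. a$k))"
  have Mx: "\<And>k. a$k \<le> Mx" unfolding Mx_def by (rule Max_ge) auto
  have mn: "\<And>k. mn \<le> a$k" unfolding mn_def by (rule Min_le) auto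
  have "Mx \<in> range (\<lambda>k. a$k)" unfolding Mx_def by (rule Max_in) auto
  then obtain im where im: "a$im = Mx" by auto
  have "mn \<in> range (\<lambda>k. a$k)" unfolding mn_def by (rule Min_in) auto
  then obtain jm where jm: "a$jm = mn" by auto
  have "rootsA \<inter> {x. a \<bullet> x = b} \<noteq> {}" using Feq F(2) by auto
  then obtain x where x: "x \<in> rootsA" "a \<bullet> x = b" by auto
  then obtain i0 j0 where "x = rt i0 j0" "i0 \<noteq> j0" by (auto simp: rootsA_eq)
  then have ij0: "i0 \<noteq> j0" "a$i0 - a$j0 = b" using x by (auto simp: inner_rt)
  have "mn < Mx"
  proof (rule ccontr)
    assume "\<not> mn < Mx"
    then have all: "\<And>k. a$k = Mx" using Mx mn by (metis antisym order.trans not_le)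
    then have "b = 0" using ij0 by simp
    then have "rootsA \<inter> {x. a \<bullet> x = b} = rootsA" using all by (auto simp: rootsA_eq inner_rt)
    then show False using Feq F(3) by (simp add: polytopeA_def)
  qed
  then have "im \<noteq> jm" using im jm by auto
  then have "a$im - a$jm \<le> b" using le[of "rt im jm"] by (auto simp: rootsA_eq inner_rt)
  moreover have "b \<le> Mx - mn" using ij0 Mx[of i0] mn[of j0] by simp
  ultimately have b: "b = Mx - mn" using im jm by simp
  define I where "I = {k. a$k = Mx}"
  define J where "J = {k. a$k = mn}"
  have PPIJ: "(I,J) \<in> PP" using im jm \<open>mn < Mx\<close> by (auto simp: PP_def I_def J_def)
  have "rootsA \<inter> {x. a \<bullet> x = b} = roots I J"
  proof
    show "rootsA \<inter> {x. a \<bullet> x = b} \<subseteq> roots I J"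
    proof
      fix x assume "x \<in> rootsA \<inter> {x. a \<bullet> x = b}"
      then obtain i j where "x = rt i j" "a$i - a$j = b" by (auto simp: rootsA_eq inner_rt)
      then have "a$i = Mx" "a$j = mn" using b Mx[of i] mn[of j] by linarith+
      then show "x \<in> roots I J" using \<open>x = rt i j\<close> by (auto simp: roots_def I_def J_def)
    qed
    show "roots I J \<subseteq> rootsA \<inter> {x. a \<bullet> x = b}"
      using b \<open>mn < Mx\<close> by (auto simp: roots_def rootsA_eq inner_rt I_def J_def)
  qed
  then show ?thesis using Feq PPIJ by auto
qed

lemma aff_dim_hull_roots:
  assumes "(I,J) \<in> PP"
  shows "aff_dim (convex hull (roots I J)) = int (card I + card J) - 2"
proof -
  have d: "I \<inter> J = {}" "I \<noteq> {}" "J \<noteq> {}" using assms by (auto simp: PP_def)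
  have "roots I J \<subseteq> {x. avec I J \<bullet> x = 2}" using avec_eq[OF d(1)] by (auto simp: roots_def rootsA_eq)
  then have "affine hull (roots I J) \<subseteq> {x. avec I J \<bullet> x = 2}"
    by (rule hull_minimal) (simp add: affine_hyperplane)
  then have n0: "0 \<notin> affine hull (roots I J)" by auto
  have "aff_dim (insert 0 (roots I J)) = int (dim (insert 0 (roots I J)))"
    by (rule aff_dim_zero) (simp add: hull_inc)
  also have "dim (insert 0 (roots I J)) = dim (span (roots I J))"
    by (metis dim_span span_insert_0)
  also have "\<dots> = card (I \<union> J) - 1" using span_roots[OF d] dim_Zs[of "I \<union> J"] d by simp
  also have "card (I \<union> J) = card I + card J" using d(1) by (simp add: card_Un_disjoint)
  finally have "aff_dim (roots I J) + 1 = int (card I + card J - 1)"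
    using n0 by (simp add: aff_dim_insert)
  moreover have "card I \<ge> 1" "card J \<ge> 1" using d by (auto simp: Suc_le_eq card_gt_0_iff)
  ultimately show ?thesis by (simp add: aff_dim_convex_hull)
qed

lemma faces_polytope:
  "{F. F face_of polytopeA \<and> F \<noteq> {} \<and> F \<noteq> polytopeA} = (\<lambda>(I,J). convex hull (roots I J)) ` PP"
proof
  show "{F. F face_of polytopeA \<and> F \<noteq> {} \<and> F \<noteq> polytopeA} \<subseteq> (\<lambda>(I,J). convex hull (roots I J)) ` PP"
  proof
    fix F assume "F \<in> {F. F face_of polytopeA \<and> F \<noteq> {} \<and> F \<noteq> polytopeA}"
    then obtain I J where "(I,J) \<in> PP" "F = convex hull (roots I J)" using face_char by blast
    then show "F \<in> (\<lambda>(I,J). convex hull (roots I J)) ` PP" by (intro image_eqI[where x="(I,J)"]) auto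
  qed
  show "(\<lambda>(I,J). convex hull (roots I J)) ` PP \<subseteq> {F. F face_of polytopeA \<and> F \<noteq> {} \<and> F \<noteq> polytopeA}"
  proof
    fix F assume "F \<in> (\<lambda>(I,J). convex hull (roots I J)) ` PP"
    then obtain I J where a: "(I,J) \<in> PP" "F = convex hull (roots I J)" by auto
    show "F \<in> {F. F face_of polytopeA \<and> F \<noteq> {} \<and> F \<noteq> polytopeA}"
      using hull_roots_face(2)[OF a(1)] hull_roots_face(3)[OF a(1)] hull_roots_face(4)[OF a(1)] a(2) by blast
  qed
qed

lemma face_poly_PP:
  "face_poly_polytope (polytopeA :: (real^'n::finite) set) = (\<Sum>(I,J)\<in>(PP::('n set \<times> 'n set) set). monom 1 (card I + card J - 2))"
proof -
  have e: "\<And>x y::nat. nat (int x + int y - 2) = x + y - 2" by arith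
  show ?thesis unfolding face_poly_polytope_def faces_polytope
    by (subst sum.reindex[OF hull_roots_inj]) (auto intro!: sum.cong simp: aff_dim_hull_roots e)
qed


lemma card_Compl_fin: "card (- (A::'n::finite set)) = CARD('n) - card A"
  by (simp add: Compl_eq_Diff_UNIV card_Diff_subset)

lemma span_hull: "span (convex hull S) = span S"
proof
  show "span (convex hull S) \<subseteq> span S"
    by (rule span_minimal[OF _ subspace_span]) (rule hull_minimal[OF span_superset], simp add: subspace_imp_convex)
  show "span S \<subseteq> span (convex hull S)" by (rule span_mono[OF hull_subset])
qed

lemma EA_eq:
  assumes N: "2 \<le> CARD('n::finite)"
  shows "(EA :: (real^'n) set) = Zs UNIV"
proof
  show "(EA :: (real^'n) set) \<subseteq> Zs UNIV"
    unfolding EA_def by (rule span_minimal[OF _ subspace_Zs]) (auto simp: rootsA_eq intro: rt_Zs)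
  obtain i0 :: 'n where True by simp
  have ne: "UNIV - {i0} \<noteq> {}"
  proof
    assume "UNIV - {i0} = {}"
    then have u: "(UNIV :: 'n set) = {i0}" by auto
    have "card (UNIV :: 'n set) = card {i0}" by (simp only: u)
    then have "CARD('n) = 1" by simp
    then show False using N by simp
  qed
  have "Zs UNIV = span (roots {i0} (UNIV - {i0}))"
  proof -
    have u: "{i0} \<union> (UNIV - {i0}) = UNIV" by auto
    show ?thesis using span_roots[of "{i0}" "UNIV - {i0}"] ne unfolding u by simp
  qed
  also have "\<dots> \<subseteq> span rootsA"
    by (rule span_mono) (unfold roots_def rootsA_eq, blast)
  finally show "Zs UNIV \<subseteq> (EA :: (real^'n) set)" by (simp add: EA_def)
qed

lemma aff_dim_polytopeA:
  assumes N: "2 \<le> CARD('n::finite)"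
  shows "aff_dim (polytopeA :: (real^'n) set) = int CARD('n) - 1"
proof -
  have "\<not> CARD('n) \<le> Suc 0" using N by simp
  then obtain i j :: 'n where ij: "i \<noteq> j" by (auto simp: card_le_Suc0_iff_eq)
  have "rt i j \<in> rootsA" "rt j i \<in> rootsA" unfolding rootsA_eq using ij by blast+
  then have "rt i j \<in> polytopeA" "rt j i \<in> polytopeA"
    unfolding polytopeA_def by (auto intro: hull_inc)
  then have "(1/2) *\<^sub>R rt i j + (1/2) *\<^sub>R rt j i \<in> polytopeA"
    unfolding polytopeA_def by (intro convexD[OF convex_convex_hull]) auto
  moreover have "(1/2) *\<^sub>R rt i j + (1/2) *\<^sub>R rt j i = (0::real^'n)" by (simp add: rt_def algebra_simps)
  ultimately have "(0::real^'n) \<in> polytopeA" by simp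
  then have "(0::real^'n) \<in> affine hull (polytopeA :: (real^'n) set)" by (rule hull_inc)
  then have "aff_dim (polytopeA :: (real^'n) set) = int (dim (polytopeA :: (real^'n) set))" by (rule aff_dim_zero)
  also have "dim (polytopeA :: (real^'n) set) = dim (span (polytopeA :: (real^'n) set))" by simp
  also have "\<dots> = dim (Zs (UNIV :: 'n set))" using EA_eq[OF N] by (simp add: polytopeA_def span_hull EA_def)
  also have "\<dots> = CARD('n) - 1" by (simp add: dim_Zs)
  finally show ?thesis using N by simp
qed

lemma arrA_eq:
  assumes N: "2 \<le> CARD('n::finite)"
  shows "(arrA :: (real^'n) set set) = range (\<lambda>m. Zs (- {m}))"
proof (cases "CARD('n) = 2")
  case True
  have "F face_of (polytopeA :: (real^'n) set) \<and> aff_dim F = int CARD('n) - 3 \<longleftrightarrow> F = {}" for F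
    using True aff_dim_empty[of F] empty_face_of by auto
  then have "(arrA :: (real^'n) set set) = {span {}}" unfolding arrA_def by auto
  also have "\<dots> = range (\<lambda>m. Zs (- {m}))"
  proof -
    have "card (- {m :: 'n}) \<le> 1" for m using True by (simp add: card_Compl_fin)
    then show ?thesis by (auto simp: Zs_small)
  qed
  finally show ?thesis .
next
  case False
  then have N3: "3 \<le> CARD('n)" using N by simp
  show ?thesis
  proof
    show "(arrA :: (real^'n) set set) \<subseteq> range (\<lambda>m. Zs (- {m}))"
    proof
      fix X assume "X \<in> (arrA :: (real^'n) set set)"
      then obtain F where F: "X = span F" "F face_of polytopeA" "aff_dim F = int CARD('n) - 3"
        by (auto simp: arrA_def)
      have "F \<noteq> {}" using F(3) N3 by auto
      moreover have "F \<noteq> polytopeA" using F(3) aff_dim_polytopeA[OF N] by auto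
      ultimately obtain I J where IJ: "(I,J) \<in> PP" "F = convex hull (roots I J)"
        using face_char F(2) by blast
      have d: "I \<inter> J = {}" "I \<noteq> {}" "J \<noteq> {}" using IJ by (auto simp: PP_def)
      have "int (card I + card J) - 2 = int CARD('n) - 3" using F(3) IJ(2) aff_dim_hull_roots[OF IJ(1)] by simp
      then have "card (I \<union> J) = CARD('n) - 1" using d(1) by (simp add: card_Un_disjoint)
      moreover have "card (- (I \<union> J)) = CARD('n) - card (I \<union> J)" by (rule card_Compl_fin)
      ultimately have "card (- (I \<union> J)) = 1" using N by linarith
      then obtain m where m: "- (I \<union> J) = {m}" by (metis card_1_singletonE)
      then have "I \<union> J = - {m}" by (metis double_complement)
      then have "X = Zs (- {m})" using F(1) IJ(2) span_roots[OF d] by (simp add: span_hull)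
      then show "X \<in> range (\<lambda>m. Zs (- {m}))" by simp
    qed
    show "range (\<lambda>m. Zs (- {m})) \<subseteq> (arrA :: (real^'n) set set)"
    proof clarify
      fix m :: 'n
      have "card (- {m}) \<ge> 2" using N3 by (simp add: card_Compl_fin)
      then have "- {m} \<noteq> {}" by auto
      then obtain i where i: "i \<noteq> m" by auto
      let ?I = "{i}" and ?J = "- {i, m}"
      have cJ: "card ?J = CARD('n) - 2" using i by (simp add: card_Compl_fin)
      then have "?J \<noteq> {}" using N3 by auto
      then have PPIJ: "(?I, ?J) \<in> PP" by (auto simp: PP_def)
      have d: "?I \<inter> ?J = {}" "?I \<noteq> {}" "?J \<noteq> {}" using PPIJ by (auto simp: PP_def)
      have U: "?I \<union> ?J = - {m}" using i by auto
      have "aff_dim (convex hull (roots ?I ?J)) = int CARD('n) - 3"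
        using aff_dim_hull_roots[OF PPIJ] cJ N3 by simp
      moreover have "span (convex hull (roots ?I ?J)) = Zs (- {m})"
        using span_roots[OF d] U by (simp add: span_hull)
      ultimately show "Zs (- {m}) \<in> (arrA :: (real^'n) set set)"
        using hull_roots_face(2)[OF PPIJ] unfolding arrA_def
        by (intro CollectI exI[of _ "convex hull (roots ?I ?J)"]) simp
    qed
  qed
qed


definition sg :: "'n set \<Rightarrow> 'n \<Rightarrow> real" where "sg P m = (if m \<in> P then 1 else -1)"
definition Reg :: "'n::finite set \<Rightarrow> (real^'n) set" where
  "Reg P = {x \<in> Zs UNIV. \<forall>m. 0 < sg P m * x$m}"
definition CReg :: "'n::finite set \<Rightarrow> (real^'n) set" where
  "CReg P = {x \<in> Zs UNIV. \<forall>m. 0 \<le> sg P m * x$m}"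
definition Ocomp :: "(real^'n::finite) set" where
  "Ocomp = {x \<in> Zs UNIV. \<forall>m. x$m \<noteq> 0}"
definition Cone :: "'n::finite set \<Rightarrow> 'n set \<Rightarrow> (real^'n) set" where
  "Cone P M = {x \<in> Zs (P \<union> M). (\<forall>m\<in>P. 0 \<le> x$m) \<and> (\<forall>m\<in>M. x$m \<le> 0)}"
definition wv :: "'n::finite set \<Rightarrow> 'n set \<Rightarrow> real^'n" where
  "wv P M = (\<chi> m. if m \<in> P then real (card M) else if m \<in> M then - real (card P) else 0)"

lemma Zs_minus: "(x :: real^'n::finite) \<in> Zs (- {m}) \<longleftrightarrow> x \<in> Zs UNIV \<and> x$m = 0"
  by (auto simp: Zs_def)

lemma EA_minus:
  assumes N: "2 \<le> CARD('n::finite)"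
  shows "(EA :: (real^'n) set) - \<Union>arrA = Ocomp"
  unfolding EA_eq[OF N] arrA_eq[OF N] Ocomp_def by (auto simp: Zs_minus)

lemma wv_Zs:
  assumes "P \<inter> M = {}"
  shows "wv P M \<in> Zs (P \<union> M)"
proof -
  have "sum (\<lambda>k. wv P M $ k) UNIV = sum (\<lambda>k. wv P M $ k) (P \<union> M)"
    by (rule sum.mono_neutral_right) (auto simp: wv_def)
  also have "\<dots> = sum (\<lambda>k. wv P M $ k) P + sum (\<lambda>k. wv P M $ k) M"
    using assms by (simp add: sum.union_disjoint)
  also have "sum (\<lambda>k. wv P M $ k) P = real (card P) * real (card M)"
    by (simp add: wv_def)
  also have "sum (\<lambda>k. wv P M $ k) M = - real (card M) * real (card P)"
  proof -
    have "sum (\<lambda>k. wv P M $ k) M = sum (\<lambda>k. - real (card P)) M"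
      by (rule sum.cong) (use assms in \<open>auto simp: wv_def\<close>)
    then show ?thesis by simp
  qed
  finally have "sum (\<lambda>k. wv P M $ k) UNIV = 0" by simp
  then show ?thesis by (auto simp: Zs_def wv_def)
qed

lemma wv_pos: "m \<in> P \<Longrightarrow> M \<noteq> {} \<Longrightarrow> 0 < wv P M $ m"
  by (simp add: wv_def card_gt_0_iff)

lemma wv_neg: "m \<in> M \<Longrightarrow> P \<inter> M = {} \<Longrightarrow> P \<noteq> {} \<Longrightarrow> wv P M $ m < 0"
  by (auto simp: wv_def card_gt_0_iff)

lemma sg_axis: "(sg P m *\<^sub>R axis m 1) \<bullet> x = sg P m * x$m"
  by (simp add: inner_axis')

lemma Reg_as: "Reg P = Zs UNIV \<inter> (\<Inter>m. {x. 0 < (sg P m *\<^sub>R axis m 1) \<bullet> x})"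
  by (auto simp: Reg_def inner_axis')

lemma CReg_as: "CReg P = Zs UNIV \<inter> (\<Inter>m. {x. (sg P m *\<^sub>R axis m 1) \<bullet> x \<ge> 0})"
  by (auto simp: CReg_def inner_axis')

lemma convex_Reg: "convex (Reg P)"
  unfolding Reg_as
  apply (intro convex_Int subspace_imp_convex[OF subspace_Zs] convex_INT ballI)
  using convex_halfspace_gt by blast

lemma closed_CReg: "closed (CReg P)"
  unfolding CReg_as
  apply (intro closed_Int closed_subspace[OF subspace_Zs] closed_INT ballI)
  using closed_halfspace_ge by blast

lemma Reg_sub: "Reg P \<subseteq> Ocomp"
  by (auto simp: Reg_def Ocomp_def) (metis mult_zero_right order_less_irrefl)

lemma comp_eq:
  assumes x: "x \<in> (Ocomp :: (real^'n::finite) set)"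
  shows "connected_component_set Ocomp x = Reg {m. 0 < x$m}"
proof
  have "0 < sg {m. 0 < x$m} m * x$m" for m
  proof -
    have "x$m \<noteq> 0" using x by (simp add: Ocomp_def)
    then show ?thesis by (cases "0 < x$m") (simp_all add: sg_def)
  qed
  then have xr: "x \<in> Reg {m. 0 < x$m}"
    using x by (simp add: Reg_def Ocomp_def)
  show "Reg {m. 0 < x$m} \<subseteq> connected_component_set Ocomp x"
    by (rule connected_component_maximal[OF xr convex_connected[OF convex_Reg] Reg_sub])
  show "connected_component_set Ocomp x \<subseteq> Reg {m. 0 < x$m}"
  proof
    fix y assume y: "y \<in> connected_component_set Ocomp x"
    let ?C = "connected_component_set Ocomp x"
    have C: "connected ?C" "?C \<subseteq> Ocomp" "x \<in> ?C"
      using x by (auto simp: connected_component_subset)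
    have yO: "y \<in> Ocomp" using y C(2) by auto
    have "0 < sg {m. 0 < x$m} m * y$m" for m
    proof (rule ccontr)
      assume a: "\<not> 0 < sg {m. 0 < x$m} m * y$m"
      have xm: "x$m \<noteq> 0" "y$m \<noteq> 0" using x yO by (auto simp: Ocomp_def)
      have "\<exists>z\<in>?C. z$m = 0"
      proof (cases "0 < x$m")
        case True
        then have "y$m \<le> 0" using a by (simp add: sg_def)
        then show ?thesis using connected_ivt_component_cart[OF C(1) y C(3), of m 0] True by simp
      next
        case False
        then have "x$m < 0" using xm by simp
        then have "0 \<le> y$m" using a False by (simp add: sg_def)
        then show ?thesis using connected_ivt_component_cart[OF C(1) C(3) y, of m 0] \<open>x$m < 0\<close> by simp
      qed
      then show False using C(2) by (auto simp: Ocomp_def)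
    qed
    then show "y \<in> Reg {m. 0 < x$m}" using yO by (auto simp: Reg_def Ocomp_def)
  qed
qed

lemma region_char:
  "R \<in> components (Ocomp :: (real^'n::finite) set) \<Longrightarrow> \<exists>P. R = Reg P \<and> R \<noteq> {}"
  by (metis components_iff comp_eq components_nonoverlap connected_component_eq_empty)

lemma Reg_nonempty:
  assumes "P \<noteq> {}" "P \<noteq> (UNIV :: 'n::finite set)"
  shows "wv P (- P) \<in> Reg P"
proof -
  have "- P \<noteq> {}" using assms(2) by auto
  have w: "wv P (- P) \<in> Zs UNIV" using wv_Zs[of P "- P"] by simp
  have "0 < sg P m * wv P (- P) $ m" for m
  proof (cases "m \<in> P")
    case True then show ?thesis using wv_pos[OF True \<open>- P \<noteq> {}\<close>] by (simp add: sg_def)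
  next
    case False then have "m \<in> - P" by simp
    then show ?thesis using wv_neg[OF \<open>m \<in> - P\<close> _ assms(1)] False by (simp add: sg_def)
  qed
  then show ?thesis using w by (simp add: Reg_def)
qed

lemma Reg_comp:
  assumes "P \<noteq> {}" "P \<noteq> (UNIV :: 'n::finite set)"
  shows "Reg P \<in> components (Ocomp :: (real^'n) set)"
proof -
  let ?w = "wv P (- P)"
  have w: "?w \<in> Reg P" by (rule Reg_nonempty[OF assms])
  then have wO: "?w \<in> Ocomp" using Reg_sub by blast
  have "{m. 0 < ?w $ m} = P"
  proof -
    have "- P \<noteq> {}" using assms(2) by auto
    have "0 < ?w $ m \<longleftrightarrow> m \<in> P" for m
    proof (cases "m \<in> P")
      case True then show ?thesis using wv_pos[OF True \<open>- P \<noteq> {}\<close>] by simp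
    next
      case False then have "?w $ m < 0" using wv_neg[of m "- P" P] assms(1) by simp
      then show ?thesis using False by simp
    qed
    then show ?thesis by auto
  qed
  then have "connected_component_set Ocomp ?w = Reg P" using comp_eq[OF wO] by simp
  then show ?thesis using componentsI[OF wO] by simp
qed

lemma closure_Reg:
  assumes ne: "Reg P \<noteq> {}"
  shows "closure (Reg P) = CReg P"
proof
  show "closure (Reg P) \<subseteq> CReg P"
    by (rule closure_minimal[OF _ closed_CReg]) (auto simp: Reg_def CReg_def less_imp_le)
  show "CReg P \<subseteq> closure (Reg P)"
  proof
    fix y assume y: "y \<in> CReg P"
    obtain p where p: "p \<in> Reg P" using ne by auto
    define f where "f k = y + inverse (real (Suc k)) *\<^sub>R p" for k
    have "f k \<in> Reg P" for k
    proof -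
      have "f k \<in> Zs UNIV" using y p subspace_Zs unfolding f_def Reg_def CReg_def
        by (auto intro: subspace_add subspace_mul)
      moreover have "0 < sg P m * f k $ m" for m
      proof -
        have "0 \<le> sg P m * y$m" using y by (simp add: CReg_def)
        moreover have "0 < sg P m * p$m" using p by (simp add: Reg_def)
        moreover have "sg P m * f k $ m = sg P m * y$m + inverse (real (Suc k)) * (sg P m * p$m)"
          by (simp add: f_def algebra_simps)
        ultimately show ?thesis by (simp add: add_nonneg_pos)
      qed
      ultimately show ?thesis by (simp add: Reg_def)
    qed
    moreover have "f \<longlonglongrightarrow> y"
    proof -
      have "(\<lambda>k. y + inverse (real (Suc k)) *\<^sub>R p) \<longlonglongrightarrow> y + 0 *\<^sub>R p"
        by (intro tendsto_intros LIMSEQ_inverse_real_of_nat)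
      then show ?thesis unfolding f_def by simp
    qed
    ultimately show "y \<in> closure (Reg P)" unfolding closure_sequential by blast
  qed
qed


lemma zero_Zs: "(0::real^'n::finite) \<in> Zs K"
  by (rule subspace_0[OF subspace_Zs])

lemma Zs_Inter: "Zs UNIV \<inter> \<Inter>((\<lambda>m. Zs (- {m})) ` S) = (Zs (- S) :: (real^'n::finite) set)"
  by (auto simp: Zs_def)

lemma lattice_eq:
  assumes N: "2 \<le> CARD('n::finite)"
  shows "arr_lattice (EA :: (real^'n) set) arrA = range Zs"
proof
  show "arr_lattice (EA :: (real^'n) set) arrA \<subseteq> range Zs"
  proof
    fix X assume "X \<in> arr_lattice (EA :: (real^'n) set) arrA"
    then obtain A where A: "X = Zs UNIV \<inter> \<Inter>A" "A \<subseteq> range (\<lambda>m. Zs (- {m}))"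
      unfolding arr_lattice_def EA_eq[OF N] arrA_eq[OF N] by blast
    define S where "S = {m. (Zs (- {m}) :: (real^'n) set) \<in> A}"
    have "A = (\<lambda>m. Zs (- {m})) ` S" using A(2) by (auto simp: S_def)
    then have "X = Zs (- S)" using A(1) Zs_Inter by simp
    then show "X \<in> range Zs" by simp
  qed
  show "range Zs \<subseteq> arr_lattice (EA :: (real^'n) set) arrA"
  proof
    fix X assume "X \<in> range (Zs :: 'n set \<Rightarrow> (real^'n) set)"
    then obtain K where K: "X = Zs K" by auto
    let ?A = "(\<lambda>m. (Zs (- {m}) :: (real^'n) set)) ` (- K)"
    have "X = Zs UNIV \<inter> \<Inter>?A" using K Zs_Inter[of "- K"] by simp
    moreover have "?A \<subseteq> arrA" using arrA_eq[OF N] by auto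
    moreover have "(0::real^'n) \<in> X" using K zero_Zs by simp
    moreover have "Zs UNIV \<inter> \<Inter>?A \<noteq> {}" using calculation by auto
    ultimately show "X \<in> arr_lattice (EA :: (real^'n) set) arrA"
      unfolding arr_lattice_def EA_eq[OF N] by blast
  qed
qed

lemma CReg_Zs: "CReg P \<inter> Zs K = Cone (P \<inter> K) (K - P)"
proof -
  have u: "(P \<inter> K) \<union> (K - P) = K" by auto
  show ?thesis unfolding Cone_def u
    by (auto simp: CReg_def Zs_def sg_def)
qed

lemma Cone_zero:
  assumes "P = {} \<or> M = {}"
  shows "Cone P M = {0}"
proof
  show "{0} \<subseteq> Cone P M" by (simp add: Cone_def zero_Zs)
  show "Cone P M \<subseteq> {0}"
  proof
    fix x assume x: "x \<in> Cone P M"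
    then have z: "\<And>k. k \<notin> P \<union> M \<Longrightarrow> x$k = 0" and s: "sum (\<lambda>k. x$k) UNIV = 0"
      by (auto simp: Cone_def Zs_def)
    show "x \<in> {0}"
    proof (cases "M = {}")
      case True
      have nn: "\<And>k. k \<in> UNIV \<Longrightarrow> 0 \<le> x$k" using x z True by (auto simp: Cone_def)
      have "(\<Sum>k\<in>UNIV. x$k) = 0 \<longleftrightarrow> (\<forall>k\<in>UNIV. x$k = 0)"
        by (rule sum_nonneg_eq_0_iff) (use nn in auto)
      then have "\<forall>k\<in>UNIV. x$k = 0" using s by simp
      then show ?thesis by (simp add: vec_eq_iff)
    next
      case False
      then have "P = {}" using assms by simp
      have nn: "\<And>k. k \<in> UNIV \<Longrightarrow> 0 \<le> - x$k" using x z \<open>P = {}\<close> by (auto simp: Cone_def)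
      have "sum (\<lambda>k. - x$k) UNIV = 0" using s by (simp add: sum_negf)
      moreover have "(\<Sum>k\<in>UNIV. - x$k) = 0 \<longleftrightarrow> (\<forall>k\<in>UNIV. - x$k = 0)"
        by (rule sum_nonneg_eq_0_iff) (use nn in auto)
      ultimately have "\<forall>k\<in>UNIV. - x$k = 0" by simp
      then show ?thesis by (simp add: vec_eq_iff)
    qed
  qed
qed

lemma roots_Cone: "P \<inter> M = {} \<Longrightarrow> roots P M \<subseteq> Cone P M"
  by (auto simp: roots_def Cone_def rt_nth intro!: rt_Zs)

lemma Cone_sub: "Cone P M \<subseteq> Zs (P \<union> M)"
  by (auto simp: Cone_def)

lemma Cone_aff:
  assumes "(P,M) \<in> PP"
  shows "aff_dim (Cone P M) = int (card P + card M) - 1"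
proof -
  have d: "P \<inter> M = {}" "P \<noteq> {}" "M \<noteq> {}" using assms by (auto simp: PP_def)
  have sp: "span (Cone P M) = Zs (P \<union> M)"
  proof
    show "span (Cone P M) \<subseteq> Zs (P \<union> M)" by (rule span_minimal[OF Cone_sub subspace_Zs])
    show "Zs (P \<union> M) \<subseteq> span (Cone P M)"
      using span_roots[OF d] span_mono[OF roots_Cone[OF d(1)]] by simp
  qed
  have "(0::real^'a) \<in> Cone P M" by (simp add: Cone_def zero_Zs)
  then have "(0::real^'a) \<in> affine hull (Cone P M)" by (rule hull_inc)
  then have "aff_dim (Cone P M) = int (dim (Cone P M))" by (rule aff_dim_zero)
  also have "dim (Cone P M) = dim (span (Cone P M))" by simp
  also have "\<dots> = card (P \<union> M) - 1" using sp dim_Zs[of "P \<union> M"] d by simp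
  also have "card (P \<union> M) = card P + card M" using d(1) by (simp add: card_Un_disjoint)
  finally show ?thesis using d by (simp add: card_gt_0_iff Suc_le_eq of_nat_diff)
qed

lemma wv_Cone:
  assumes "(P,M) \<in> PP"
  shows "wv P M \<in> Cone P M"
proof -
  have d: "P \<inter> M = {}" "P \<noteq> {}" "M \<noteq> {}" using assms by (auto simp: PP_def)
  show ?thesis using wv_Zs[OF d(1)] wv_pos[OF _ d(3)] wv_neg[OF _ d(1) d(2)]
    by (auto simp: Cone_def less_imp_le)
qed

lemma Cone_inj: "inj_on (\<lambda>(P,M). Cone P M) PP"
proof (rule inj_onI, clarify)
  fix P M P' M' assume a: "(P,M) \<in> PP" "(P',M') \<in> PP" "Cone P M = Cone P' M'"
  have sub: "A \<subseteq> A' \<and> B \<subseteq> B'" if "(A,B) \<in> PP" "(A',B') \<in> PP" "Cone A B = Cone A' B'" for A B A' B'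
  proof -
    have d: "A \<inter> B = {}" "A \<noteq> {}" "B \<noteq> {}" using that(1) by (auto simp: PP_def)
    have w: "wv A B \<in> Cone A' B'" using wv_Cone[OF that(1)] that(3) by simp
    have "m \<in> A'" if "m \<in> A" for m
    proof -
      have p: "0 < wv A B $ m" using wv_pos[OF that d(3)] .
      have w1: "m \<notin> A' \<Longrightarrow> m \<notin> B' \<Longrightarrow> wv A B $ m = 0" and w2: "m \<in> B' \<Longrightarrow> wv A B $ m \<le> 0"
        using w by (auto simp: Cone_def Zs_def)
      show ?thesis using p w1 w2 by force
    qed
    moreover have "m \<in> B'" if "m \<in> B" for m
    proof -
      have p: "wv A B $ m < 0" using wv_neg[OF that d(1) d(2)] .
      have w1: "m \<notin> A' \<Longrightarrow> m \<notin> B' \<Longrightarrow> wv A B $ m = 0" and w2: "m \<in> A' \<Longrightarrow> 0 \<le> wv A B $ m"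
        using w by (auto simp: Cone_def Zs_def)
      show ?thesis using p w1 w2 by force
    qed
    ultimately show ?thesis by blast
  qed
  have "P \<subseteq> P' \<and> M \<subseteq> M'" by (rule sub[OF a(1) a(2) a(3)])
  moreover have "P' \<subseteq> P \<and> M' \<subseteq> M" by (rule sub[OF a(2) a(1) a(3)[symmetric]])
  ultimately show "P = P' \<and> M = M'" by auto
qed

lemma Cone_ne0: "(P,M) \<in> PP \<Longrightarrow> Cone P M \<noteq> {0}"
proof
  assume a: "(P,M) \<in> PP" "Cone P M = {0}"
  obtain m where m: "m \<in> P" using a(1) by (auto simp: PP_def)
  have "M \<noteq> {}" using a(1) by (auto simp: PP_def)
  have "wv P M = 0" using wv_Cone[OF a(1)] a(2) by simp
  moreover have "0 < wv P M $ m" by (rule wv_pos[OF m \<open>M \<noteq> {}\<close>])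
  ultimately show False by simp
qed


lemma regions_eq:
  assumes N: "2 \<le> CARD('n::finite)"
  shows "arr_regions (EA :: (real^'n) set) arrA = components Ocomp"
  unfolding arr_regions_def EA_minus[OF N] ..

lemma finite_PP: "finite (PP :: ('n::finite set \<times> 'n set) set)"
  by (rule finite_subset[OF subset_UNIV]) simp

lemma zero_closure_Reg:
  assumes "P \<noteq> {}" "P \<noteq> (UNIV :: 'n::finite set)"
  shows "(0::real^'n) \<in> closure (Reg P)"
proof -
  have "Reg P \<noteq> {}" using Reg_nonempty[OF assms] by auto
  then have "closure (Reg P) = CReg P" by (rule closure_Reg)
  moreover have "(0::real^'n) \<in> CReg P" by (simp add: CReg_def zero_Zs)
  ultimately show ?thesis by simp
qed

lemma faces_arr:
  assumes N: "2 \<le> CARD('n::finite)"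
  shows "arr_faces (EA :: (real^'n) set) arrA = insert {0} ((\<lambda>(P,M). Cone P M) ` PP)"
proof
  show "arr_faces (EA :: (real^'n) set) arrA \<subseteq> insert {0} ((\<lambda>(P,M). Cone P M) ` PP)"
  proof
    fix F assume "F \<in> arr_faces (EA :: (real^'n) set) arrA"
    then obtain R X where RX: "F = closure R \<inter> X" "R \<in> components Ocomp" "X \<in> range Zs"
      unfolding arr_faces_def regions_eq[OF N] lattice_eq[OF N] by blast
    obtain P where P: "R = Reg P" "R \<noteq> {}" using region_char[OF RX(2)] by blast
    obtain K where K: "X = Zs K" using RX(3) by auto
    have F: "F = Cone (P \<inter> K) (K - P)"
      using RX(1) P K closure_Reg[of P] CReg_Zs by simp
    show "F \<in> insert {0} ((\<lambda>(P,M). Cone P M) ` PP)"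
    proof (cases "P \<inter> K = {} \<or> K - P = {}")
      case True
      have "Cone (P \<inter> K) (K - P) = {0}" by (rule Cone_zero) (use True in auto)
      then show ?thesis using F by simp
    next
      case False
      then have "(P \<inter> K, K - P) \<in> PP" by (auto simp: PP_def)
      then show ?thesis using F by force
    qed
  qed
  show "insert {0} ((\<lambda>(P,M). Cone P M) ` PP) \<subseteq> arr_faces (EA :: (real^'n) set) arrA"
  proof -
    have mem: "closure (Reg P) \<inter> Zs K \<in> arr_faces (EA :: (real^'n) set) arrA"
      if "P \<noteq> {}" "P \<noteq> UNIV" for P K
    proof -
      have "Reg P \<in> components (Ocomp :: (real^'n) set)" by (rule Reg_comp[OF that])
      moreover have "Zs K \<in> range (Zs :: 'n set \<Rightarrow> (real^'n) set)" by simp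
      moreover have "(0::real^'n) \<in> closure (Reg P) \<inter> Zs K"
        using zero_closure_Reg[OF that] zero_Zs by simp
      ultimately show ?thesis
        unfolding arr_faces_def regions_eq[OF N] lattice_eq[OF N] by blast
    qed
    obtain i :: 'n where True by simp
    have "{i} \<noteq> (UNIV :: 'n set)"
    proof
      assume u: "{i} = (UNIV :: 'n set)"
      have "card (UNIV :: 'n set) = card {i}" by (simp only: u)
      then show False using N by simp
    qed
    then have "closure (Reg {i}) \<inter> Zs {} \<in> arr_faces (EA :: (real^'n) set) arrA" using mem by simp
    moreover have "closure (Reg {i}) \<inter> Zs {} = {(0::real^'n)}"
      using Zs_small[of "{}"] zero_closure_Reg[of "{i}"] \<open>{i} \<noteq> UNIV\<close> by auto
    ultimately have "{0} \<in> arr_faces (EA :: (real^'n) set) arrA" by simp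
    moreover have "Cone P M \<in> arr_faces (EA :: (real^'n) set) arrA" if "(P,M) \<in> PP" for P M
    proof -
      have d: "P \<inter> M = {}" "P \<noteq> {}" "M \<noteq> {}" using that by (auto simp: PP_def)
      then have "P \<noteq> UNIV" by auto
      have "Reg P \<noteq> {}" using Reg_nonempty[OF d(2) \<open>P \<noteq> UNIV\<close>] by auto
      then have c: "closure (Reg P) = CReg P" by (rule closure_Reg)
      have e1: "P \<inter> (P \<union> M) = P" "(P \<union> M) - P = M" using d(1) by auto
      have "closure (Reg P) \<inter> Zs (P \<union> M) = Cone P M"
        unfolding c CReg_Zs e1 ..
      then show ?thesis using mem[OF d(2) \<open>P \<noteq> UNIV\<close>, of "P \<union> M"] by simp
    qed
    ultimately show ?thesis by auto
  qed
qed

lemma arr_face_poly_PP: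
  assumes N: "2 \<le> CARD('n::finite)"
  shows "arr_face_poly (EA :: (real^'n) set) arrA
     = 1 + (\<Sum>(P,M)\<in>(PP::('n set \<times> 'n set) set). monom 1 (card P + card M - 1))"
proof -
  have e: "\<And>x y::nat. nat (int x + int y - 1) = x + y - 1" by arith
  have n0: "{0} \<notin> (\<lambda>(P,M). Cone P M) ` (PP :: ('n set \<times> 'n set) set)" using Cone_ne0 by auto
  have "arr_face_poly (EA :: (real^'n) set) arrA
      = monom 1 (nat (aff_dim {0::real^'n})) + (\<Sum>F\<in>(\<lambda>(P,M). Cone P M) ` (PP :: ('n set \<times> 'n set) set). monom 1 (nat (aff_dim F)))"
    unfolding arr_face_poly_def faces_arr[OF N]
    by (rule sum.insert[OF finite_imageI[OF finite_PP] n0])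
  also have "(\<Sum>F\<in>(\<lambda>(P,M). Cone P M) ` (PP :: ('n set \<times> 'n set) set). monom 1 (nat (aff_dim F)))
      = (\<Sum>(P,M)\<in>(PP::('n set \<times> 'n set) set). monom 1 (card P + card M - 1))"
    by (subst sum.reindex[OF Cone_inj]) (auto intro!: sum.cong simp: Cone_aff e)
  finally show ?thesis by (simp add: one_pCons monom_0)
qed


lemma sum_by_card:
  fixes h :: "nat \<Rightarrow> 'b::comm_semiring_1"
  assumes S: "finite S"
  shows "(\<Sum>K\<in>{K. K \<subseteq> S \<and> P (card K)}. h (card K))
       = (\<Sum>k\<in>{k. k \<le> card S \<and> P k}. of_nat (card S choose k) * h k)"
proof -
  have fin: "finite {K. K \<subseteq> S \<and> P (card K)}" by (rule finite_subset[of _ "Pow S"]) (auto simp: S)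
  have "(\<Sum>K\<in>{K. K \<subseteq> S \<and> P (card K)}. h (card K))
      = (\<Sum>k\<in>{k. k \<le> card S \<and> P k}. \<Sum>K\<in>{K. K \<in> {K. K \<subseteq> S \<and> P (card K)} \<and> card K = k}. h (card K))"
    by (rule sum.group[symmetric, OF fin]) (auto simp: card_mono S)
  also have "\<dots> = (\<Sum>k\<in>{k. k \<le> card S \<and> P k}. of_nat (card S choose k) * h k)"
  proof (rule sum.cong[OF refl])
    fix k assume k: "k \<in> {k. k \<le> card S \<and> P k}"
    have e: "{K. K \<in> {K. K \<subseteq> S \<and> P (card K)} \<and> card K = k} = {K. K \<subseteq> S \<and> card K = k}"
      using k by auto
    show "(\<Sum>K\<in>{K. K \<in> {K. K \<subseteq> S \<and> P (card K)} \<and> card K = k}. h (card K)) = of_nat (card S choose k) * h k"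
      unfolding e using n_subsets[OF S, of k] by simp
  qed
  finally show ?thesis .
qed

lemma sum_by_card_UNIV:
  fixes h :: "nat \<Rightarrow> 'b::comm_semiring_1"
  shows "(\<Sum>K\<in>{K::'n::finite set. P (card K)}. h (card K))
       = (\<Sum>k\<in>{k. k \<le> CARD('n) \<and> P k}. of_nat (CARD('n) choose k) * h k)"
  using sum_by_card[where S="UNIV :: 'n set" and P=P and h=h] by simp

lemma card_proper_sub:
  assumes "finite K" "K \<noteq> {}"
  shows "card {I. I \<subseteq> K \<and> I \<noteq> {} \<and> I \<noteq> K} = 2 ^ card K - 2"
proof -
  have "{I. I \<subseteq> K \<and> I \<noteq> {} \<and> I \<noteq> K} = Pow K - {{}, K}" by auto
  moreover have "{{}, K} \<subseteq> Pow K" by auto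
  ultimately have "card {I. I \<subseteq> K \<and> I \<noteq> {} \<and> I \<noteq> K} = card (Pow K) - card {{}, K}"
    using assms by (simp add: card_Diff_subset)
  also have "\<dots> = 2 ^ card K - 2" using assms by (simp add: card_Pow)
  finally show ?thesis .
qed

lemma sum_PP:
  fixes g :: "nat \<Rightarrow> 'b::comm_semiring_1"
  shows "(\<Sum>(I,J)\<in>(PP::('n::finite set \<times> 'n set) set). g (card I + card J))
       = (\<Sum>k\<in>{k. k \<le> CARD('n) \<and> 2 \<le> k}. of_nat (CARD('n) choose k) * (of_nat (2 ^ k - 2) * g k))"
proof -
  define Sg where "Sg = (SIGMA K:{K::'n set. 2 \<le> card K}. {I. I \<subseteq> K \<and> I \<noteq> {} \<and> I \<noteq> K})"
  define f where "f = (\<lambda>(K::'n set, I::'n set). (I, K - I))"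
  have inj: "inj_on f Sg" by (rule inj_onI) (auto simp: f_def Sg_def)
  have img: "f ` Sg = PP"
  proof
    show "f ` Sg \<subseteq> PP" by (auto simp: f_def Sg_def PP_def)
    show "PP \<subseteq> f ` Sg"
    proof clarify
      fix I J :: "'n set" assume a: "(I,J) \<in> PP"
      have d: "I \<inter> J = {}" "I \<noteq> {}" "J \<noteq> {}" using a by (auto simp: PP_def)
      have "card (I \<union> J) = card I + card J" using d(1) by (simp add: card_Un_disjoint)
      moreover have "card I \<ge> 1" "card J \<ge> 1" using d by (auto simp: Suc_le_eq card_gt_0_iff)
      ultimately have "2 \<le> card (I \<union> J)" by simp
      moreover have "I \<noteq> I \<union> J" using d by auto
      ultimately have "(I \<union> J, I) \<in> Sg" using d by (auto simp: Sg_def)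
      moreover have "f (I \<union> J, I) = (I, J)" using d(1) by (auto simp: f_def)
      ultimately show "(I,J) \<in> f ` Sg" by force
    qed
  qed
  have "(\<Sum>(I,J)\<in>(PP::('n set \<times> 'n set) set). g (card I + card J))
      = (\<Sum>x\<in>Sg. (\<lambda>(I,J). g (card I + card J)) (f x))"
    unfolding img[symmetric] using sum.reindex[OF inj, of "\<lambda>(I,J). g (card I + card J)"] by (simp add: comp_def)
  also have "\<dots> = (\<Sum>(K,I)\<in>Sg. g (card I + card (K - I)))"
    by (rule sum.cong) (auto simp: f_def)
  also have "\<dots> = (\<Sum>K\<in>{K::'n set. 2 \<le> card K}. \<Sum>I\<in>{I. I \<subseteq> K \<and> I \<noteq> {} \<and> I \<noteq> K}. g (card I + card (K - I)))"
    unfolding Sg_def by (rule sum.Sigma[symmetric]) auto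
  also have "\<dots> = (\<Sum>K\<in>{K::'n set. 2 \<le> card K}. of_nat (2 ^ card K - 2) * g (card K))"
  proof (rule sum.cong[OF refl])
    fix K :: "'n set" assume K: "K \<in> {K. 2 \<le> card K}"
    then have "K \<noteq> {}" by auto
    have "(\<Sum>I\<in>{I. I \<subseteq> K \<and> I \<noteq> {} \<and> I \<noteq> K}. g (card I + card (K - I)))
        = (\<Sum>I\<in>{I. I \<subseteq> K \<and> I \<noteq> {} \<and> I \<noteq> K}. g (card K))"
    proof (rule sum.cong[OF refl])
      fix I assume "I \<in> {I. I \<subseteq> K \<and> I \<noteq> {} \<and> I \<noteq> K}"
      then have "I \<subseteq> K" by simp
      then have "card I + card (K - I) = card K"
        by (metis card_Diff_subset card_mono finite_class.finite_UNIV finite_subset le_add_diff_inverse subset_UNIV)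
      then show "g (card I + card (K - I)) = g (card K)" by simp
    qed
    also have "\<dots> = of_nat (2 ^ card K - 2) * g (card K)"
      using card_proper_sub[of K] \<open>K \<noteq> {}\<close> by simp
    finally show "(\<Sum>I\<in>{I. I \<subseteq> K \<and> I \<noteq> {} \<and> I \<noteq> K}. g (card I + card (K - I)))
        = of_nat (2 ^ card K - 2) * g (card K)" .
  qed
  also have "\<dots> = (\<Sum>k\<in>{k. k \<le> CARD('n) \<and> 2 \<le> k}. of_nat (CARD('n) choose k) * (of_nat (2 ^ k - 2) * g k))"
    by (rule sum_by_card_UNIV)
  finally show ?thesis .
qed


definition Qmu :: "'a set set \<Rightarrow> 'a set \<Rightarrow> ('a set \<Rightarrow> int) \<Rightarrow> bool" where
  "Qmu L b mu \<longleftrightarrow>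
     (\<forall>y\<in>L. y \<subseteq> b \<longrightarrow> (\<Sum>z\<in>{z\<in>L. z \<subseteq> b \<and> y \<subseteq> z}. mu z) = (if y = b then 1 else 0))
   \<and> (\<forall>y. (y \<notin> L \<or> \<not> y \<subseteq> b) \<longrightarrow> mu y = 0)"

lemma mob_unique:
  assumes fin: "finite L" and q1: "Qmu L b mu1" and q2: "Qmu L b mu2"
  shows "mu1 = mu2"
proof -
  have main: "\<forall>y. card {z\<in>L. y \<subset> z} = m \<longrightarrow> mu1 y = mu2 y" for m
  proof (induction m rule: less_induct)
    case (less m)
    show ?case
    proof (intro allI impI)
      fix y assume cy: "card {z\<in>L. y \<subset> z} = m"
      show "mu1 y = mu2 y"
      proof (cases "y \<in> L \<and> y \<subseteq> b")
        case False
        then show ?thesis using q1 q2 by (auto simp: Qmu_def)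
      next
        case True
        define A where "A = {z\<in>L. z \<subseteq> b \<and> y \<subseteq> z}"
        have fA: "finite A" using fin by (simp add: A_def)
        have yA: "y \<in> A" using True by (simp add: A_def)
        have eq: "mu1 z = mu2 z" if z: "z \<in> A - {y}" for z
        proof -
          have zy: "y \<subset> z" "z \<in> L" using z by (auto simp: A_def)
          have "{w\<in>L. z \<subset> w} \<subset> {w\<in>L. y \<subset> w}" using zy by auto
          then have "card {w\<in>L. z \<subset> w} < card {w\<in>L. y \<subset> w}"
            by (rule psubset_card_mono[rotated]) (use fin in simp)
          then show ?thesis using less.IH cy by blast
        qed
        have s1: "(\<Sum>z\<in>A. mu1 z) = (if y = b then 1 else 0)" using q1 True by (auto simp: Qmu_def A_def)
        have s2: "(\<Sum>z\<in>A. mu2 z) = (if y = b then 1 else 0)" using q2 True by (auto simp: Qmu_def A_def)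
        have "(\<Sum>z\<in>A. mu1 z) = mu1 y + (\<Sum>z\<in>A - {y}. mu1 z)" using sum.remove[OF fA yA] .
        moreover have "(\<Sum>z\<in>A. mu2 z) = mu2 y + (\<Sum>z\<in>A - {y}. mu2 z)" using sum.remove[OF fA yA] .
        moreover have "(\<Sum>z\<in>A - {y}. mu1 z) = (\<Sum>z\<in>A - {y}. mu2 z)" using eq by (rule sum.cong[OF refl])
        ultimately show ?thesis using s1 s2 by simp
      qed
    qed
  qed
  show ?thesis
  proof (rule ext)
    fix y show "mu1 y = mu2 y" using main[of "card {z\<in>L. y \<subset> z}"] by simp
  qed
qed

lemma mobius_from_eq:
  assumes "finite L" "Qmu L b mu"
  shows "mobius_from L (\<lambda>x y. y \<subseteq> x) b = mu"
  unfolding mobius_from_def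
proof (rule the_equality)
  show "(\<forall>y\<in>L. b \<supseteq> y \<longrightarrow> (\<Sum>z\<in>{z \<in> L. b \<supseteq> z \<and> z \<supseteq> y}. mu z) = (if y = b then 1 else 0)) \<and>
        (\<forall>y. y \<notin> L \<or> \<not> b \<supseteq> y \<longrightarrow> mu y = 0)"
    using assms(2) by (simp add: Qmu_def)
  fix mu' :: "'a set \<Rightarrow> int" assume "(\<forall>y\<in>L. b \<supseteq> y \<longrightarrow> (\<Sum>z\<in>{z \<in> L. b \<supseteq> z \<and> z \<supseteq> y}. mu' z) = (if y = b then 1 else 0)) \<and>
        (\<forall>y. y \<notin> L \<or> \<not> b \<supseteq> y \<longrightarrow> mu' y = 0)"
  then have "Qmu L b mu'" by (simp add: Qmu_def)
  then show "mu' = mu" using mob_unique[OF assms(1)] assms(2) by blast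
qed

definition supp :: "(real^'n::finite) set \<Rightarrow> 'n set" where
  "supp X = {k. \<exists>x\<in>X. x$k \<noteq> 0}"

lemma big_elem:
  assumes "2 \<le> card K" "k \<in> K"
  shows "\<exists>x\<in>Zs K. x$k \<noteq> (0::real)"
proof -
  have "K - {k} \<noteq> {}"
  proof
    assume "K - {k} = {}"
    then have "K \<subseteq> {k}" by auto
    then have "card K \<le> 1" using card_mono[of "{k}" K] by simp
    then show False using assms(1) by simp
  qed
  then obtain k' where k': "k' \<in> K" "k' \<noteq> k" by auto
  have "rt k k' \<in> Zs K" using k' assms(2) by (rule_tac rt_Zs) auto
  moreover have "rt k k' $ k \<noteq> 0" using k' by (simp add: rt_nth)
  ultimately show ?thesis by blast
qed

lemma supp_Zs: "2 \<le> card K \<Longrightarrow> supp (Zs K) = K"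
  using big_elem by (auto simp: supp_def Zs_def)

lemma Zs_mono: "K \<subseteq> K' \<Longrightarrow> Zs K \<subseteq> Zs K'"
  by (auto simp: Zs_def)

lemma Zs_sub_iff: "2 \<le> card K \<Longrightarrow> Zs K \<subseteq> Zs K' \<longleftrightarrow> K \<subseteq> K'"
proof
  assume a: "2 \<le> card K" "Zs K \<subseteq> Zs K'"
  show "K \<subseteq> K'"
  proof
    fix k assume "k \<in> K"
    then obtain x where "x \<in> Zs K" "x$k \<noteq> 0" using big_elem[OF a(1)] by blast
    then show "k \<in> K'" using a(2) by (auto simp: Zs_def)
  qed
qed (rule Zs_mono)

lemma Zs_ne0:
  assumes "2 \<le> card K" shows "Zs K \<noteq> {0}"
proof -
  have "K \<noteq> {}" using assms by auto
  then obtain k where "k \<in> K" by auto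
  then obtain x where x: "x \<in> Zs K" "x$k \<noteq> 0" using big_elem[OF assms] by blast
  then have "x \<noteq> 0" by (metis zero_index)
  then show ?thesis using x(1) by blast
qed

lemma range_Zs: "range (Zs :: 'n set \<Rightarrow> (real^'n::finite) set) = insert {0} (Zs ` {K. 2 \<le> card K})"
proof
  show "range (Zs :: 'n set \<Rightarrow> (real^'n::finite) set) \<subseteq> insert {0} (Zs ` {K. 2 \<le> card K})"
  proof
    fix X assume "X \<in> range (Zs :: 'n set \<Rightarrow> (real^'n::finite) set)"
    then obtain K where K: "X = Zs K" by blast
    show "X \<in> insert {0} (Zs ` {K. 2 \<le> card K})"
    proof (cases "2 \<le> card K")
      case True then show ?thesis using K by blast
    next
      case False then have "card K \<le> 1" by simp
      then have "X = {0}" using K Zs_small by simp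
      then show ?thesis by simp
    qed
  qed
  have "{0} = (Zs {} :: (real^'n::finite) set)" using Zs_small[where K="{}::'n set"] by simp
  then have "{0} \<in> range (Zs :: 'n set \<Rightarrow> (real^'n::finite) set)" by (rule range_eqI)
  then show "insert {0} (Zs ` {K. 2 \<le> card K}) \<subseteq> range (Zs :: 'n set \<Rightarrow> (real^'n::finite) set)"
    by blast
qed

lemma inj_Zs: "inj_on Zs {K. 2 \<le> card K}"
proof (rule inj_onI)
  fix K K' :: "'a set" assume a: "K \<in> {K. 2 \<le> card K}" "K' \<in> {K. 2 \<le> card K}" "Zs K = Zs K'"
  then have "K \<subseteq> K'" "K' \<subseteq> K" using Zs_sub_iff[of K K'] Zs_sub_iff[of K' K] by auto
  then show "K = K'" by auto
qed


lemma alt_sum2: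
  assumes "2 \<le> N"
  shows "(\<Sum>k\<in>{k. k \<le> N \<and> 2 \<le> k}. of_nat (N choose k) * (-1::int)^(N-k)) = (-1)^(N-1) * (1 - int N)"
proof -
  have b: "(\<Sum>k\<le>N. of_nat (N choose k) * (-1::int)^(N-k)) = 0"
  proof -
    have "(1 + (-1::int))^N = (\<Sum>k\<le>N. of_nat (N choose k) * 1^k * (-1)^(N-k))"
      by (rule binomial_ring)
    moreover have "(0::int)^N = 0" using assms by (simp add: zero_power)
    ultimately show ?thesis by simp
  qed
  have e: "{..N} = insert 0 (insert 1 {k. k \<le> N \<and> 2 \<le> k})" using assms by auto
  have "(\<Sum>k\<le>N. of_nat (N choose k) * (-1::int)^(N-k))
      = (-1)^N + (int N * (-1)^(N-1) + (\<Sum>k\<in>{k. k \<le> N \<and> 2 \<le> k}. of_nat (N choose k) * (-1::int)^(N-k)))"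
    unfolding e by (subst sum.insert; simp)+
  moreover have "(-1::int)^N = - ((-1)^(N-1))"
  proof -
    have "N = Suc (N - 1)" using assms by simp
    then have "(-1::int)^N = (-1) * (-1)^(N-1)" by (metis power_Suc)
    then show ?thesis by simp
  qed
  ultimately show ?thesis using b by (simp add: algebra_simps)
qed

lemma alt_pow_sum:
  assumes "finite D"
  shows "(\<Sum>B\<in>Pow D. (-1::int)^card B) = (if D = {} then 1 else 0)"
proof (cases "D = {}")
  case True then show ?thesis by simp
next
  case False
  then have "card D > 0" using assms by (simp add: card_gt_0_iff)
  have e1: "Pow D = {K. K \<subseteq> D \<and> True}" by auto
  have e2: "{k. k \<le> card D \<and> True} = {..card D}" by auto
  have "(\<Sum>B\<in>Pow D. (-1::int)^card B) = (\<Sum>k\<le>card D. of_nat (card D choose k) * (-1)^k)"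
    unfolding e1 sum_by_card[OF assms, where P="\<lambda>_. True" and h="\<lambda>k. (-1::int)^k"] e2 ..
  also have "\<dots> = (\<Sum>k\<le>card D. (-1)^k * of_nat (card D choose k))" by (simp add: mult.commute)
  also have "\<dots> = 0" by (rule choose_alternating_sum[OF \<open>card D > 0\<close>])
  finally show ?thesis using False by simp
qed

definition muA :: "(real^'n::finite) set \<Rightarrow> int" where
  "muA X = (if X \<in> range Zs then (if X = {0} then (-1)^(CARD('n)-1) * int (CARD('n) - 1)
            else (-1)^(CARD('n) - card (supp X))) else 0)"

lemma muA_Zs: "2 \<le> card K \<Longrightarrow> muA (Zs K :: (real^'n::finite) set) = (-1)^(CARD('n) - card K)"
  using Zs_ne0[of K] supp_Zs[of K] by (auto simp: muA_def)

lemma finite_rangeZs: "finite (range (Zs :: 'n set \<Rightarrow> (real^'n::finite) set))"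
  by simp

lemma Q_muA:
  assumes N: "2 \<le> CARD('n::finite)"
  shows "Qmu (range (Zs :: 'n set \<Rightarrow> (real^'n) set)) (Zs UNIV) muA"
  unfolding Qmu_def
proof (intro conjI ballI allI impI)
  let ?L = "range (Zs :: 'n set \<Rightarrow> (real^'n) set)"
  let ?Lz = "(Zs :: 'n set \<Rightarrow> (real^'n) set) ` {K. 2 \<le> card K}"
  have n0: "{0} \<notin> ?Lz" using Zs_ne0 by auto
  have UN: "2 \<le> card (UNIV :: 'n set)" using N by simp
  fix y assume y: "y \<notin> ?L \<or> \<not> y \<subseteq> Zs UNIV"
  have nL: "y \<notin> range (Zs :: 'n set \<Rightarrow> (real^'n) set)"
  proof
    assume "y \<in> range (Zs :: 'n set \<Rightarrow> (real^'n) set)"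
    then obtain K where K: "y = Zs K" by auto
    then have "y \<subseteq> Zs UNIV" using Zs_mono[of K "UNIV :: 'n set"] by simp
    then show False using y K by simp
  qed
  show "muA y = 0" unfolding muA_def by (rule if_not_P[OF nL])
next
  let ?L = "range (Zs :: 'n set \<Rightarrow> (real^'n) set)"
  let ?Lz = "(Zs :: 'n set \<Rightarrow> (real^'n) set) ` {K. 2 \<le> card K}"
  have n0: "{0} \<notin> ?Lz" using Zs_ne0 by auto
  have UN: "2 \<le> card (UNIV :: 'n set)" using N by simp
  fix y assume y: "y \<in> ?L" "y \<subseteq> Zs UNIV"
  show "(\<Sum>z\<in>{z \<in> ?L. z \<subseteq> Zs UNIV \<and> y \<subseteq> z}. muA z) = (if y = Zs UNIV then 1 else 0)"
  proof (cases "y = {0}")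
    case True
    have "z \<subseteq> Zs UNIV \<and> y \<subseteq> z" if zL: "z \<in> ?L" for z
    proof -
      obtain K where "z = Zs K" using zL by (rule rangeE)
      then show ?thesis using True Zs_mono[of K "UNIV :: 'n set"] zero_Zs[of K] by auto
    qed
    then have "{z \<in> ?L. z \<subseteq> Zs UNIV \<and> y \<subseteq> z} = ?L" by auto
    then have A: "{z \<in> ?L. z \<subseteq> Zs UNIV \<and> y \<subseteq> z} = insert {0} ?Lz" using range_Zs by simp
    have "(\<Sum>z\<in>insert {0} ?Lz. muA z) = muA {0::real^'n} + (\<Sum>z\<in>?Lz. muA z)"
      by (rule sum.insert[OF _ n0]) simp
    also have "(\<Sum>z\<in>?Lz. muA z) = (\<Sum>K\<in>{K::'n set. 2 \<le> card K}. (-1)^(CARD('n) - card K))"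
      by (subst sum.reindex[OF inj_Zs]) (auto intro!: sum.cong simp: muA_Zs)
    also have "\<dots> = (\<Sum>k\<in>{k. k \<le> CARD('n) \<and> 2 \<le> k}. of_nat (CARD('n) choose k) * (-1)^(CARD('n) - k))"
      by (rule sum_by_card_UNIV)
    also have "\<dots> = (-1)^(CARD('n)-1) * (1 - int CARD('n))" by (rule alt_sum2[OF N])
    also have "muA {0::real^'n} = (-1)^(CARD('n)-1) * int (CARD('n) - 1)"
    proof -
      have "{0::real^'n} \<in> ?L" using range_Zs by auto
      then show ?thesis by (simp add: muA_def)
    qed
    finally have "(\<Sum>z\<in>insert {0} ?Lz. muA z) = 0" using N by (simp add: of_nat_diff algebra_simps)
    moreover have "y \<noteq> Zs UNIV" using True Zs_ne0[OF UN] by simp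
    ultimately show ?thesis unfolding A by simp
  next
    case False
    have "y \<in> insert {0} ?Lz" using y(1) by (simp only: range_Zs)
    then have "y \<in> ?Lz" using False by simp
    then obtain K where K: "y = Zs K" "2 \<le> card K" by auto
    have A: "{z \<in> ?L. z \<subseteq> Zs UNIV \<and> y \<subseteq> z} = Zs ` {K'. K \<subseteq> K'}"
    proof
      show "{z \<in> ?L. z \<subseteq> Zs UNIV \<and> y \<subseteq> z} \<subseteq> Zs ` {K'. K \<subseteq> K'}"
      proof
        fix z assume z: "z \<in> {z \<in> ?L. z \<subseteq> Zs UNIV \<and> y \<subseteq> z}"
        then have "z \<in> insert {0} ?Lz" using range_Zs by auto
        moreover have "z \<noteq> {0}"
        proof
          assume "z = {0}"
          then have "Zs K \<subseteq> {0}" using z K by auto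
          then have "Zs K = {0::real^'n}" using zero_Zs by auto
          then show False using Zs_ne0[OF K(2)] by simp
        qed
        ultimately obtain K'' where "z = Zs K''" "2 \<le> card K''" by auto
        then show "z \<in> Zs ` {K'. K \<subseteq> K'}" using z K Zs_sub_iff[OF K(2), of K''] by auto
      qed
      show "Zs ` {K'. K \<subseteq> K'} \<subseteq> {z \<in> ?L. z \<subseteq> Zs UNIV \<and> y \<subseteq> z}"
        using K by (auto simp: Zs_def)
    qed
    have sub: "{K'. K \<subseteq> K'} \<subseteq> {K'. 2 \<le> card K'}"
    proof
      fix K' assume "K' \<in> {K'. K \<subseteq> K'}"
      then have "card K \<le> card K'" by (simp add: card_mono)
      then show "K' \<in> {K'. 2 \<le> card K'}" using K(2) by simp
    qed
    have "(\<Sum>z\<in>Zs ` {K'. K \<subseteq> K'}. muA z) = (\<Sum>K'\<in>{K'. K \<subseteq> K'}. muA (Zs K' :: (real^'n) set))"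
      by (rule sum.reindex[OF inj_on_subset[OF inj_Zs sub], unfolded comp_def])
    also have "\<dots> = (\<Sum>K'\<in>{K'. K \<subseteq> K'}. (-1)^(CARD('n) - card K'))"
      using sub by (intro sum.cong[OF refl]) (auto simp: muA_Zs)
    also have "\<dots> = (\<Sum>B\<in>Pow (- K). (-1)^(CARD('n) - card (- B)))"
    proof -
      have "{K'. K \<subseteq> K'} = uminus ` Pow (- K)"
      proof
        show "{K'. K \<subseteq> K'} \<subseteq> uminus ` Pow (- K)"
        proof
          fix K' assume "K' \<in> {K'. K \<subseteq> K'}"
          then have "- K' \<in> Pow (- K)" "K' = - (- K')" by auto
          then show "K' \<in> uminus ` Pow (- K)" by blast
        qed
        show "uminus ` Pow (- K) \<subseteq> {K'. K \<subseteq> K'}" by auto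
      qed
      moreover have "inj_on uminus (Pow (- (K :: 'n set)))" by (rule inj_onI) simp
      ultimately show ?thesis by (simp add: sum.reindex)
    qed
    also have "\<dots> = (\<Sum>B\<in>Pow (- K). (-1)^(card B))"
    proof (rule sum.cong[OF refl])
      fix B :: "'n set"
      have "card B \<le> CARD('n)" by (rule card_mono) simp_all
      then show "(-1::int)^(CARD('n) - card (- B)) = (-1)^(card B)" by (simp add: card_Compl_fin)
    qed
    also have "\<dots> = (if - K = {} then 1 else 0)" by (rule alt_pow_sum) simp
    also have "(- K = {}) \<longleftrightarrow> y = Zs UNIV"
    proof
      assume "- K = {}"
      then have "K = UNIV" by auto
      then show "y = Zs UNIV" using K by simp
    next
      assume "y = Zs UNIV"
      then have "Zs UNIV \<subseteq> Zs K" using K by simp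
      then have "UNIV \<subseteq> K" using Zs_sub_iff[OF UN] by blast
      then show "- K = {}" by auto
    qed
    finally show ?thesis unfolding A .
  qed
qed

lemma mobius_A:
  assumes N: "2 \<le> CARD('n::finite)"
  shows "mobius_from (arr_lattice (EA :: (real^'n) set) arrA) (\<lambda>x y. y \<subseteq> x) EA = muA"
  by (subst lattice_eq[OF N], subst EA_eq[OF N], rule mobius_from_eq[OF finite_rangeZs Q_muA[OF N]])

lemma char_poly_sum:
  assumes N: "2 \<le> CARD('n::finite)"
  shows "arr_char_poly (EA :: (real^'n) set) arrA
    = monom ((-1)^(CARD('n)-1) * int (CARD('n) - 1)) 0
      + (\<Sum>k\<in>{k. k \<le> CARD('n) \<and> 2 \<le> k}. of_nat (CARD('n) choose k) * monom ((-1)^(CARD('n) - k)) (k - 1))"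
proof -
  let ?Lz = "(Zs :: 'n set \<Rightarrow> (real^'n) set) ` {K. 2 \<le> card K}"
  have n0: "{0} \<notin> ?Lz" using Zs_ne0 by auto
  have "arr_char_poly (EA :: (real^'n) set) arrA = (\<Sum>X\<in>insert {0} ?Lz. monom (muA X) (dim X))"
    unfolding arr_char_poly_def mobius_A[OF N] unfolding lattice_eq[OF N] range_Zs ..
  also have "\<dots> = monom (muA {0::real^'n}) (dim {0::real^'n}) + (\<Sum>X\<in>?Lz. monom (muA X) (dim X))"
    by (rule sum.insert[OF _ n0]) simp
  also have "(\<Sum>X\<in>?Lz. monom (muA X) (dim X)) = (\<Sum>K\<in>{K::'n set. 2 \<le> card K}. monom ((-1)^(CARD('n) - card K)) (card K - 1))"
  proof -
    have "monom (muA (Zs K :: (real^'n) set)) (dim (Zs K :: (real^'n) set)) = monom ((-1)^(CARD('n) - card K)) (card K - 1)"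
      if "K \<in> {K. 2 \<le> card K}" for K :: "'n set"
    proof -
      have K: "2 \<le> card K" "K \<noteq> {}" using that by auto
      show ?thesis using muA_Zs[OF K(1)] dim_Zs[OF K(2)] by simp
    qed
    then show ?thesis by (subst sum.reindex[OF inj_Zs]) (auto intro!: sum.cong)
  qed
  also have "\<dots> = (\<Sum>k\<in>{k. k \<le> CARD('n) \<and> 2 \<le> k}. of_nat (CARD('n) choose k) * monom ((-1)^(CARD('n) - k)) (k - 1))"
    by (rule sum_by_card_UNIV)
  also have "muA {0::real^'n} = (-1)^(CARD('n)-1) * int (CARD('n) - 1)"
  proof -
    have "{0::real^'n} \<in> range Zs" using range_Zs by auto
    then show ?thesis by (simp add: muA_def)
  qed
  also have "dim {0::real^'n} = 0" by simp
  finally show ?thesis .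
qed


lemma ofnat_monom: "(of_nat c :: int poly) * monom a i = monom (int c * a) i"
  by (simp add: of_nat_monom mult_monom)

lemma int_pow2: "int (2 ^ Suc j - 2) = 2 ^ Suc j - 2"
proof -
  have "(2::nat) \<le> 2 ^ Suc j" using one_le_power[of "2::nat" j] by simp
  then show ?thesis by (simp add: of_nat_diff)
qed

lemma part1:
  assumes "CARD('n::finite) = n + 1"
  shows "face_poly_polytope (polytopeA :: (real^'n) set)
           = (\<Sum>i<n. monom (int ((n+1) choose (i+2)) * (2^(i+2) - 2)) i)"
proof -
  have "face_poly_polytope (polytopeA :: (real^'n) set)
      = (\<Sum>k\<in>{k. k \<le> CARD('n) \<and> 2 \<le> k}. of_nat (CARD('n) choose k) * (of_nat (2 ^ k - 2) * monom (1::int) (k - 2)))"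
    unfolding face_poly_PP by (rule sum_PP[where g="\<lambda>k. monom (1::int) (k - 2)"])
  also have "\<dots> = (\<Sum>k\<in>(\<lambda>i. i + 2) ` {..<n}. of_nat ((n+1) choose k) * (of_nat (2 ^ k - 2) * monom (1::int) (k - 2)))"
  proof -
    have "{k. k \<le> CARD('n) \<and> 2 \<le> k} = (\<lambda>i. i + 2) ` {..<n}"
    proof
      show "{k. k \<le> CARD('n) \<and> 2 \<le> k} \<subseteq> (\<lambda>i. i + 2) ` {..<n}"
      proof
        fix k assume "k \<in> {k. k \<le> CARD('n) \<and> 2 \<le> k}"
        then have "k - 2 \<in> {..<n}" "k = (k - 2) + 2" using assms by auto
        then show "k \<in> (\<lambda>i. i + 2) ` {..<n}" by blast
      qed
      show "(\<lambda>i. i + 2) ` {..<n} \<subseteq> {k. k \<le> CARD('n) \<and> 2 \<le> k}" using assms by auto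
    qed
    then show ?thesis using assms by simp
  qed
  also have "\<dots> = (\<Sum>i<n. of_nat ((n+1) choose (i+2)) * (of_nat (2 ^ (i+2) - 2) * monom (1::int) i))"
    by (subst sum.reindex) (auto simp: inj_on_def)
  also have "\<dots> = (\<Sum>i<n. monom (int ((n+1) choose (i+2)) * (2^(i+2) - 2)) i)"
  proof (rule sum.cong[OF refl])
    fix i
    have "(of_nat (2 ^ (i+2) - 2) :: int poly) * monom 1 i = monom (int (2^(i+2) - 2)) i"
      using ofnat_monom[of "2 ^ (i+2) - 2" 1 i] by simp
    also have "int (2^(i+2) - 2) = 2^(i+2) - 2" using int_pow2[of "Suc i"] by simp
    finally have f: "(of_nat (2 ^ (i+2) - 2) :: int poly) * monom 1 i = monom (2^(i+2) - 2) i" .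
    show "of_nat ((n+1) choose (i+2)) * (of_nat (2 ^ (i+2) - 2) * monom (1::int) i)
        = monom (int ((n+1) choose (i+2)) * (2^(i+2) - 2)) i"
    proof -
      have g: "int (2^(i+2) - 2) = 2^(i+2) - 2" using int_pow2[of "Suc i"] by simp
      show ?thesis by (simp only: ofnat_monom g mult_1_right)
    qed
  qed
  finally show ?thesis .
qed

lemma part2:
  assumes "CARD('n::finite) = n + 1" "n \<ge> 1"
  shows "arr_face_poly (EA :: (real^'n) set) arrA
           = 1 + (\<Sum>i\<in>{1..n}. monom (int ((n+1) choose (i+1)) * (2^(i+1) - 2)) i)"
proof -
  have N: "2 \<le> CARD('n)" using assms by simp
  have "arr_face_poly (EA :: (real^'n) set) arrA
      = 1 + (\<Sum>k\<in>{k. k \<le> CARD('n) \<and> 2 \<le> k}. of_nat (CARD('n) choose k) * (of_nat (2 ^ k - 2) * monom (1::int) (k - 1)))"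
    unfolding arr_face_poly_PP[OF N] by (subst sum_PP[where g="\<lambda>k. monom (1::int) (k - 1)"]) (rule refl)
  also have "(\<Sum>k\<in>{k. k \<le> CARD('n) \<and> 2 \<le> k}. of_nat (CARD('n) choose k) * (of_nat (2 ^ k - 2) * monom (1::int) (k - 1)))
      = (\<Sum>k\<in>Suc ` {1..n}. of_nat ((n+1) choose k) * (of_nat (2 ^ k - 2) * monom (1::int) (k - 1)))"
  proof -
    have "{k. k \<le> CARD('n) \<and> 2 \<le> k} = Suc ` {1..n}"
    proof
      show "{k. k \<le> CARD('n) \<and> 2 \<le> k} \<subseteq> Suc ` {1..n}"
      proof
        fix k assume "k \<in> {k. k \<le> CARD('n) \<and> 2 \<le> k}"
        then have "k - 1 \<in> {1..n}" "k = Suc (k - 1)" using assms by auto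
        then show "k \<in> Suc ` {1..n}" by blast
      qed
      show "Suc ` {1..n} \<subseteq> {k. k \<le> CARD('n) \<and> 2 \<le> k}" using assms by auto
    qed
    then show ?thesis using assms by simp
  qed
  also have "\<dots> = (\<Sum>i\<in>{1..n}. of_nat ((n+1) choose Suc i) * (of_nat (2 ^ Suc i - 2) * monom (1::int) i))"
    by (subst sum.reindex) (auto simp: inj_on_def)
  also have "\<dots> = (\<Sum>i\<in>{1..n}. monom (int ((n+1) choose (i+1)) * (2^(i+1) - 2)) i)"
  proof (rule sum.cong[OF refl])
    fix i
    have "(of_nat (2 ^ Suc i - 2) :: int poly) * monom 1 i = monom (int (2^Suc i - 2)) i"
      using ofnat_monom[of "2 ^ Suc i - 2" 1 i] by simp
    also have "int (2^Suc i - 2) = 2^Suc i - 2" by (rule int_pow2)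
    finally have f: "(of_nat (2 ^ Suc i - 2) :: int poly) * monom 1 i = monom (2^Suc i - 2) i" .
    show "of_nat ((n+1) choose Suc i) * (of_nat (2 ^ Suc i - 2) * monom (1::int) i)
        = monom (int ((n+1) choose (i+1)) * (2^(i+1) - 2)) i"
    proof -
      have g: "int (2^(i+1) - 2) = 2^(i+1) - 2" using int_pow2[of i] by simp
      show ?thesis by (simp only: ofnat_monom g mult_1_right Suc_eq_plus1)
    qed
  qed
  finally show ?thesis .
qed

lemma part3:
  assumes "CARD('n::finite) = n + 1" "n \<ge> 1"
  shows "arr_char_poly (EA :: (real^'n) set) arrA
           = monom ((-1)^n * int n) 0
             + (\<Sum>k\<in>{1..n}. monom (int ((n+1) choose (k+1)) * (-1)^(n-k)) k)"
proof -
  have N: "2 \<le> CARD('n)" using assms by simp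
  have e: "{k. k \<le> CARD('n) \<and> 2 \<le> k} = Suc ` {1..n}"
  proof
    show "{k. k \<le> CARD('n) \<and> 2 \<le> k} \<subseteq> Suc ` {1..n}"
    proof
      fix k assume "k \<in> {k. k \<le> CARD('n) \<and> 2 \<le> k}"
      then have "k - 1 \<in> {1..n}" "k = Suc (k - 1)" using assms by auto
      then show "k \<in> Suc ` {1..n}" by blast
    qed
    show "Suc ` {1..n} \<subseteq> {k. k \<le> CARD('n) \<and> 2 \<le> k}" using assms by auto
  qed
  have "arr_char_poly (EA :: (real^'n) set) arrA
    = monom ((-1)^n * int n) 0
      + (\<Sum>k\<in>Suc ` {1..n}. of_nat ((n+1) choose k) * monom ((-1)^(n + 1 - k)) (k - 1))"
    unfolding char_poly_sum[OF N] e using assms by simp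
  also have "(\<Sum>k\<in>Suc ` {1..n}. of_nat ((n+1) choose k) * monom ((-1::int)^(n + 1 - k)) (k - 1))
      = (\<Sum>k\<in>{1..n}. monom (int ((n+1) choose (k+1)) * (-1)^(n-k)) k)"
    by (subst sum.reindex) (auto simp: inj_on_def ofnat_monom intro!: sum.cong)
  finally show ?thesis .
qed

lemma coeff_lin_pow: "coeff ([:1, -1:] ^ i) j = (-1)^j * int (i choose j)"
proof (induction i arbitrary: j)
  case 0
  then show ?case by (cases j) auto
next
  case (Suc i)
  have e: "[:1, -1:] ^ Suc i = [:1, -1:] ^ i + pCons 0 (- ([:1, -1:] ^ i :: int poly))"
    by (simp add: mult_pCons_left)
  show ?case
  proof (cases j)
    case 0 then show ?thesis unfolding e using Suc.IH[of 0] by simp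
  next
    case (Suc j')
    show ?thesis unfolding e using Suc.IH[of j'] Suc.IH[of "Suc j'"] \<open>j = Suc j'\<close>
      by (simp add: algebra_simps)
  qed
qed

lemma part4:
  "smult ((-1)^n) (\<Sum>i\<in>{1..n}. [:1, -1:]^i)
    = monom ((-1)^n * int n) 0 + (\<Sum>k\<in>{1..n}. monom (int ((n+1) choose (k+1)) * (-1)^(n-k)) k)"
proof (rule poly_eqI)
  fix j
  have L: "coeff (smult ((-1)^n) (\<Sum>i\<in>{1..n}. [:1, -1:]^i)) j = (-1)^n * (\<Sum>i\<in>{1..n}. (-1)^j * int (i choose j))"
    by (simp add: coeff_sum coeff_lin_pow)
  have R: "coeff (monom ((-1)^n * int n) 0 + (\<Sum>k\<in>{1..n}. monom (int ((n+1) choose (k+1)) * (-1)^(n-k)) k)) j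
      = (if j = 0 then (-1)^n * int n else 0) + (if j \<in> {1..n} then int ((n+1) choose (j+1)) * (-1)^(n-j) else 0)"
    by (simp add: coeff_sum)
  show "coeff (smult ((-1)^n) (\<Sum>i\<in>{1..n}. [:1, -1:]^i)) j
      = coeff (monom ((-1)^n * int n) 0 + (\<Sum>k\<in>{1..n}. monom (int ((n+1) choose (k+1)) * (-1)^(n-k)) k)) j"
  proof (cases "j = 0")
    case True
    then show ?thesis unfolding L R by simp
  next
    case False
    have s: "(\<Sum>i\<in>{1..n}. int (i choose j)) = int ((n+1) choose (j+1))"
    proof -
      have "{..n} = insert 0 {1..n}" by auto
      then have "(\<Sum>i\<le>n. (i choose j)) = (\<Sum>i\<in>{1..n}. (i choose j))" using False by simp
      moreover have "(\<Sum>i\<le>n. (i choose j)) = (n+1) choose (j+1)" using sum_choose_upper[of j n] by simp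
      ultimately show ?thesis by (metis of_nat_sum)
    qed
    have "(\<Sum>i\<in>{1..n}. (-1::int)^j * int (i choose j)) = (-1)^j * int ((n+1) choose (j+1))"
      by (subst sum_distrib_left[symmetric]) (simp only: s)
    moreover have "(-1::int)^n * (-1)^j * int ((n+1) choose (j+1))
        = (if j \<in> {1..n} then int ((n+1) choose (j+1)) * (-1)^(n-j) else 0)"
    proof (cases "j \<le> n")
      case True
      have "(-1::int)^n = (-1)^(n-j) * (-1)^j" using True by (simp add: power_add[symmetric])
      then have "(-1::int)^n * (-1)^j = (-1)^(n-j) * ((-1)^j * (-1)^j)" by simp
      also have "(-1::int)^j * (-1)^j = 1" by (simp add: power_add[symmetric] mult_2[symmetric])
      finally show ?thesis using True False by simp
    next
      case False
      then show ?thesis by (simp add: binomial_eq_0)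
    qed
    ultimately show ?thesis unfolding L R using False by (simp add: mult.assoc)
  qed
qed


theorem proposition4p3:
  fixes n :: nat
  assumes "CARD('n::finite) = n + 1" and "n \<ge> 1"
  shows "(face_poly_polytope (polytopeA :: (real^'n) set)
           = (\<Sum>i<n. monom (int ((n+1) choose (i+2)) * (2^(i+2) - 2)) i))
       \<and> (arr_face_poly (EA :: (real^'n) set) arrA
           = 1 + (\<Sum>i\<in>{1..n}. monom (int ((n+1) choose (i+1)) * (2^(i+1) - 2)) i))
       \<and> (arr_char_poly (EA :: (real^'n) set) arrA
           = monom ((-1)^n * int n) 0
             + (\<Sum>k\<in>{1..n}. monom (int ((n+1) choose (k+1)) * (-1)^(n-k)) k))
       \<and> (arr_char_poly (EA :: (real^'n) set) arrA
           = smult ((-1)^n) (\<Sum>i\<in>{1..n}. [:1, -1:]^i))"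
  proof (intro conjI)
  show "face_poly_polytope (polytopeA :: (real^'n) set)
           = (\<Sum>i<n. monom (int ((n+1) choose (i+2)) * (2^(i+2) - 2)) i)"
    by (rule part1[OF assms(1)])
  show "arr_face_poly (EA :: (real^'n) set) arrA
           = 1 + (\<Sum>i\<in>{1..n}. monom (int ((n+1) choose (i+1)) * (2^(i+1) - 2)) i)"
    by (rule part2[OF assms])
  show "arr_char_poly (EA :: (real^'n) set) arrA
           = monom ((-1)^n * int n) 0
             + (\<Sum>k\<in>{1..n}. monom (int ((n+1) choose (k+1)) * (-1)^(n-k)) k)"
    by (rule part3[OF assms])
  show "arr_char_poly (EA :: (real^'n) set) arrA
           = smult ((-1)^n) (\<Sum>i\<in>{1..n}. [:1, -1:]^i)"
    unfolding part3[OF assms] by (rule part4[symmetric])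
qed

end
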